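(* Let $n\geq2$ be an integer, $b:=-n+i$, $D=\{0,m\}$ with $2\le m\le n^2$. Let $\alpha\in E_{n,D}$ and suppose there is exactly one sequence $(\alpha_j)_{j\ge1}$ with $\alpha_j\in\{0,\pm m\}$ and $\alpha=\sum_{j\ge1}\alpha_jb^{-j}$. Let $p\ge1$ and integers $a_1,\ldots,a_p$ and nonnegative integers $u_1,\ldots,u_p$ be such that $(m-|\alpha_j|)_{j\ge1}$ equals $a_1,\ldots,a_p$ followed by the infinite repetition of $a_1+u_1,\ldots,a_p+u_p$. Then, with $C(\alpha):=C_{n,D}\cap(C_{n,D}+\alpha)$, $$\dim_BC(\alpha)=\dim_HC(\alpha)=\dim_PC(\alpha)=\frac{\log 2\sum_{\ell=1}^p(a_\ell+u_\ell)}{mp\log|b|}.$$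
   Context: $C_{n,D}$ is the attractor of $\{z\mapsto b^{-1}(z+d): d\in D\}$, i.e. $C_{n,D}=\{\sum_{j\ge1}d_jb^{-j}:d_j\in D\}$. $E_{n,D}$ is the attractor of $\{z\mapsto b^{-1}(z+\delta):\delta\in D-D\}$. $\dim_B,\dim_H,\dim_P$ denote box-counting, Hausdorff and packing dimension. *)

theory Defs
  imports "HOL-Analysis.Analysis"
begin

text \<open>C(b,D) = { sum_{j>=1} d_j b^(-j) : d_j in D }.  Index shifted: d j stands for d_(j+1).\<close>
definition radix_set :: "complex \<Rightarrow> complex set \<Rightarrow> complex set" where
  "radix_set b D = {(\<Sum>j. d j / b ^ (Suc j)) | d. \<forall>j. d j \<in> D}"

definition diff_set :: "complex set \<Rightarrow> complex set" where
  "diff_set D = {x - y | x y. x \<in> D \<and> y \<in> D}"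

definition radix_diff_set :: "complex \<Rightarrow> complex set \<Rightarrow> complex set" where
  "radix_diff_set b D = radix_set b (diff_set D)"

definition diam_pow :: "real \<Rightarrow> 'a::metric_space set \<Rightarrow> real" where
  "diam_pow s U = (if U = {} then 0 else if s = 0 then 1 else diameter U powr s)"

definition hausdorff_content :: "real \<Rightarrow> real \<Rightarrow> 'a::metric_space set \<Rightarrow> ennreal" where
  "hausdorff_content s \<delta> S =
     (INF U \<in> {U :: nat \<Rightarrow> 'a set. S \<subseteq> (\<Union>i. U i) \<and> (\<forall>i. bounded (U i) \<and> diameter (U i) \<le> \<delta>)}.
        \<Sum>i. ennreal (diam_pow s (U i)))"

definition hausdorff_measure :: "real \<Rightarrow> 'a::metric_space set \<Rightarrow> ennreal" where
  "hausdorff_measure s S = (SUP \<delta> \<in> {0<..}. hausdorff_content s \<delta> S)"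

definition hausdorff_dim :: "'a::metric_space set \<Rightarrow> real" where
  "hausdorff_dim S = Inf {s. 0 \<le> s \<and> hausdorff_measure s S = 0}"

text \<open>Packing premeasure: supremum over (finite, hence all countable) packings by disjoint
  closed balls centred in S with radii at most delta, of sum (2 r)^s.\<close>
definition packing_pre :: "real \<Rightarrow> real \<Rightarrow> 'a::metric_space set \<Rightarrow> ennreal" where
  "packing_pre s \<delta> S =
     (SUP P \<in> {P :: ('a \<times> real) set. finite P \<and> P \<subseteq> S \<times> {0<..\<delta>} \<and>
                  disjoint_family_on (\<lambda>(c, r). cball c r) P}.
        \<Sum>(c, r) \<in> P. ennreal ((2 * r) powr s))"

definition packing_zero :: "real \<Rightarrow> 'a::metric_space set \<Rightarrow> ennreal" where
  "packing_zero s S = (INF \<delta> \<in> {0<..}. packing_pre s \<delta> S)"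

definition packing_measure :: "real \<Rightarrow> 'a::metric_space set \<Rightarrow> ennreal" where
  "packing_measure s S =
     (INF A \<in> {A :: nat \<Rightarrow> 'a set. S \<subseteq> (\<Union>i. A i)}. \<Sum>i. packing_zero s (A i))"

definition packing_dim :: "'a::metric_space set \<Rightarrow> real" where
  "packing_dim S = Inf {s. 0 \<le> s \<and> packing_measure s S = 0}"

definition covering_number :: "real \<Rightarrow> 'a::metric_space set \<Rightarrow> nat" where
  "covering_number \<delta> S =
     (LEAST k. \<exists>F. finite F \<and> card F = k \<and> S \<subseteq> \<Union>F \<and> (\<forall>U\<in>F. bounded U \<and> diameter U \<le> \<delta>))"

definition has_box_dim :: "'a::metric_space set \<Rightarrow> real \<Rightarrow> bool" where
  "has_box_dim S d \<longleftrightarrow>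
     ((\<lambda>\<delta>. ln (real (covering_number \<delta> S)) / - ln \<delta>) \<longlongrightarrow> d) (at_right 0)"

end

theory Submission
  imports Defs "HOL-Probability.Probability"
begin
lemma tail_bound:
  fixes b :: complex and e :: "nat \<Rightarrow> complex"
  assumes b2: "cmod b \<ge> 2" and eM: "\<And>j. cmod (e j) \<le> M" and e0: "\<And>j. j < L \<Longrightarrow> e j = 0"
  shows "summable (\<lambda>j. e j / b ^ Suc j)" "cmod (\<Sum>j. e j / b ^ Suc j) \<le> M / cmod b ^ L"
proof -
  let ?r = "cmod b"
  have r0: "?r > 0" using b2 by linarith
  have q1: "1/?r < 1" using b2 by (simp add: divide_less_eq)
  have q1': "norm (1/?r) < 1" using q1 r0 by simp
  have M0: "M \<ge> 0" using eM[of 0] norm_ge_zero[of "e 0"] by linarith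
  have nb: "cmod (e j / b ^ Suc j) \<le> M * (1/?r) ^ Suc j" for j
    proof -
    have "cmod (e j / b ^ Suc j) = cmod (e j) / ?r ^ Suc j" by (simp add: norm_divide norm_power norm_mult del: power_Suc)
    also have "\<dots> \<le> M / ?r ^ Suc j" using eM[of j] r0 by (intro divide_right_mono) auto
    finally show ?thesis by (simp add: power_divide)
  qed
  have sg: "summable (\<lambda>j. M * (1/?r) ^ Suc j)"
    using q1' by (intro summable_mult summable_Suc_iff[THEN iffD2] summable_geometric) auto
  show sm: "summable (\<lambda>j. e j / b ^ Suc j)"
    by (rule summable_comparison_test'[OF sg]) (use nb in auto)
  have "(\<Sum>j. e j / b ^ Suc j) = (\<Sum>k. e (k + L) / b ^ Suc (k + L))"
    using suminf_split_initial_segment[OF sm, of L] e0 by simp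
  also have "cmod \<dots> \<le> (\<Sum>k. M * (1/?r) ^ Suc (k + L))"
  proof -
    have sg2: "summable (\<lambda>k. M * (1/?r) ^ Suc (k + L))"
      using summable_ignore_initial_segment[OF sg, of L] by simp
    have "summable (\<lambda>k. cmod (e (k + L) / b ^ Suc (k + L)))"
      by (rule summable_comparison_test'[OF sg2]) (use nb in auto)
    hence "cmod (\<Sum>k. e (k + L) / b ^ Suc (k + L)) \<le> (\<Sum>k. cmod (e (k + L) / b ^ Suc (k + L)))"
      by (rule summable_norm)
    also have "\<dots> \<le> (\<Sum>k. M * (1/?r) ^ Suc (k + L))"
      by (rule suminf_le) (use nb sg2 \<open>summable (\<lambda>k. cmod _)\<close> in auto)
    finally show ?thesis .
  qed
  also have "(\<Sum>k. M * (1/?r) ^ Suc (k + L)) = M * (1/?r) ^ Suc L * (\<Sum>k. (1/?r) ^ k)"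
    by (subst suminf_mult[symmetric]) (use q1' in \<open>auto simp: power_add summable_geometric ac_simps\<close>)
  also have "\<dots> = M * (1/?r) ^ Suc L * (1 / (1 - 1/?r))"
    using q1' by (subst suminf_geometric) auto
  also have "\<dots> = M / ?r ^ L * (1 / (?r - 1))"
    using r0 b2 by (simp add: field_simps power_divide)
  also have "\<dots> \<le> M / ?r ^ L"
    using b2 M0 r0 by (intro mult_left_le) (auto simp: field_simps)
  finally show "cmod (\<Sum>j. e j / b ^ Suc j) \<le> M / cmod b ^ L" .
qed

primrec GI :: "complex \<Rightarrow> nat \<Rightarrow> (nat \<Rightarrow> complex) \<Rightarrow> complex" where
  "GI b 0 e = 0"
| "GI b (Suc L) e = b * GI b L e + e L"

lemma GI_partial:
  assumes "b \<noteq> 0"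
  shows "(\<Sum>j<L. e j / b ^ Suc j) = GI b L e / b ^ L"
  by (induction L) (use assms in \<open>auto simp: field_simps\<close>)

lemma GI_cong: "(\<And>j. j < L \<Longrightarrow> e j = e' j) \<Longrightarrow> GI b L e = GI b L e'"
  by (induction L) auto

definition gint :: "complex \<Rightarrow> bool" where
  "gint z \<longleftrightarrow> Re z \<in> \<int> \<and> Im z \<in> \<int>"

lemma gint_GI:
  assumes "gint b" "\<And>j. j < L \<Longrightarrow> gint (e j)"
  shows "gint (GI b L e)"
  using assms by (induction L) (auto simp: gint_def)

lemma gint_bad:
  fixes n :: nat and c :: real and w :: complex
  assumes "gint w" "(- of_nat n + \<i>) * w = complex_of_real c" "c \<noteq> 0" "\<bar>c\<bar> < real n ^ 2 + 1"
  shows False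
proof -
  obtain x where x: "Re w = of_int x" using assms(1) by (auto simp: gint_def elim: Ints_cases)
  obtain y where y: "Im w = of_int y" using assms(1) by (auto simp: gint_def elim: Ints_cases)
  have e1: "- real n * Re w - Im w = c" and e2: "Re w - real n * Im w = 0"
    using arg_cong[OF assms(2), of Re] arg_cong[OF assms(2), of Im] by auto
  have "Re w = real n * Im w" using e2 by simp
  hence "c = - (real n ^ 2 + 1) * Im w" using e1 by (simp add: power2_eq_square algebra_simps)
  hence "c = - (real n ^ 2 + 1) * of_int y" using y by simp
  moreover have "y \<noteq> 0" using \<open>c \<noteq> 0\<close> calculation by auto
  hence "\<bar>real_of_int y\<bar> \<ge> 1" by linarith
  ultimately have "\<bar>c\<bar> \<ge> real n ^ 2 + 1"
    by (simp add: abs_mult) (smt (verit) mult_le_cancel_left1 zero_le_power2)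
  thus False using assms(4) by simp
qed

locale cset =
  fixes n m :: nat and s :: "nat \<Rightarrow> int" and f B :: real
  assumes n2: "n \<ge> 2" and m2: "2 \<le> m" and mn: "m \<le> n ^ 2"
    and s01: "\<And>j. s j \<in> {0, int m, - int m}"
    and f0: "f \<ge> 0" and NB: "\<And>L. \<bar>real (card {j. j < L \<and> s j = 0}) - f * real L\<bar> \<le> B"
begin

definition bb :: complex where "bb = - of_nat n + \<i>"
definition rr :: real where "rr = cmod bb"
definition J :: "nat \<Rightarrow> nat set" where "J L = {j. j < L \<and> s j = 0}"
definition N :: "nat \<Rightarrow> nat" where "N L = card (J L)"
definition dig :: "nat \<Rightarrow> bool \<Rightarrow> complex" where
  "dig j x = (if s j = 0 then (if x then of_nat m else 0) else if s j = int m then of_nat m else 0)"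
definition Z :: "(nat \<Rightarrow> bool) \<Rightarrow> complex" where
  "Z \<omega> = (\<Sum>j. dig j (\<omega> j) / bb ^ Suc j)"
definition gk :: "nat \<Rightarrow> (nat \<Rightarrow> bool) \<Rightarrow> complex" where
  "gk L v = GI bb L (\<lambda>j. dig j (v j))"

lemma finite_J[simp]: "finite (J L)" by (simp add: J_def)

lemma N_bound: "\<bar>real (N L) - f * real L\<bar> \<le> B"
  using NB[of L] by (simp add: N_def J_def)

lemma rr_sq: "rr ^ 2 = real n ^ 2 + 1"
  by (simp add: rr_def bb_def cmod_def)

lemma rr_gt2: "rr > 2"
proof -
  have "real n \<ge> 2" using n2 by simp
  hence "real n ^ 2 \<ge> 2 ^ 2" by (intro power_mono) auto
  hence "real n ^ 2 \<ge> 4" by simp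
  hence "rr ^ 2 > 2 ^ 2" using rr_sq by simp
  moreover have "rr \<ge> 0" by (simp add: rr_def)
  ultimately show ?thesis using power2_less_imp_less by fastforce
qed

lemma rr_pos: "rr > 0" using rr_gt2 by simp
lemma bb_norm: "cmod bb = rr" by (simp add: rr_def)
lemma bb_nz: "bb \<noteq> 0" using rr_pos bb_norm by auto

lemma m_lt: "real m < real n ^ 2 + 1" using mn by (metis of_nat_le_iff of_nat_power less_add_one order.strict_trans1)

lemma dig_norm: "cmod (dig j x) \<le> m" by (simp add: dig_def)

lemma dig_in: "dig j x \<in> {0, of_nat m}" by (simp add: dig_def)

lemma dig_free: "s j = 0 \<Longrightarrow> dig j x = dig j y \<Longrightarrow> x = y"
  using m2 by (auto simp: dig_def split: if_splits)

lemma dig_nfree: "s j \<noteq> 0 \<Longrightarrow> dig j x = dig j y"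
  by (simp add: dig_def)

lemma GI_inj:
  assumes "\<And>j. j < L \<Longrightarrow> e j \<in> {0, of_nat m}" "\<And>j. j < L \<Longrightarrow> e' j \<in> {0, of_nat m}"
    and "GI bb L e = GI bb L e'"
  shows "j < L \<Longrightarrow> e j = e' j"
  using assms
proof (induction L arbitrary: j)
  case 0 then show ?case by simp
next
  case (Suc L)
  have gb: "gint bb" by (simp add: gint_def bb_def)
  have g1: "gint (e j)" "gint (e' j)" if "j < L" for j
    using Suc.prems(2)[of j] Suc.prems(3)[of j] that by (auto simp: gint_def)
  have ge: "gint (GI bb L e)" "gint (GI bb L e')"
    using g1 by (auto intro!: gint_GI gb)
  have eq: "bb * (GI bb L e' - GI bb L e) = e L - e' L"
    using Suc.prems(4) by (simp add: algebra_simps)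
  have eL: "e L = e' L"
  proof (rule ccontr)
    assume ne: "e L \<noteq> e' L"
    have "\<exists>c. e L - e' L = complex_of_real c \<and> c \<noteq> 0 \<and> \<bar>c\<bar> < real n ^ 2 + 1"
    proof -
      have "(e L = of_nat m \<and> e' L = 0) \<or> (e L = 0 \<and> e' L = of_nat m)"
        using Suc.prems(2,3)[of L] ne by auto
      then show ?thesis
      proof
        assume "e L = of_nat m \<and> e' L = 0"
        then show ?thesis using m_lt m2 by (intro exI[of _ "real m"]) auto
      next
        assume "e L = 0 \<and> e' L = of_nat m"
        then show ?thesis using m_lt m2 by (intro exI[of _ "- real m"]) auto
      qed
    qed
    then obtain c where c: "e L - e' L = complex_of_real c" "c \<noteq> 0" "\<bar>c\<bar> < real n ^ 2 + 1" by blast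
    have "gint (GI bb L e' - GI bb L e)" using ge by (auto simp: gint_def)
    then show False using gint_bad[of "GI bb L e' - GI bb L e" n c] c eq by (simp add: bb_def)
  qed
  have "GI bb L e = GI bb L e'" using eL Suc.prems(4) bb_nz by simp
  then show ?case using Suc by (cases "j = L") (auto simp: eL)
qed

lemma gk_inj:
  assumes "v \<in> PiE (J L) (\<lambda>_. UNIV)" "v' \<in> PiE (J L) (\<lambda>_. UNIV)" "gk L v = gk L v'"
  shows "v = v'"
proof
  fix j
  show "v j = v' j"
  proof (cases "j \<in> J L")
    case True
    hence "dig j (v j) = dig j (v' j)" using GI_inj[of L "\<lambda>j. dig j (v j)" "\<lambda>j. dig j (v' j)" j]
      assms(3) dig_in by (auto simp: gk_def J_def)
    then show ?thesis using dig_free True by (auto simp: J_def)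
  next
    case False
    then show ?thesis using assms by (auto simp: PiE_def extensional_def)
  qed
qed

lemma gk_restrict: "gk L (restrict \<omega> (J L)) = gk L \<omega>"
  unfolding gk_def by (rule GI_cong) (auto simp: J_def dig_nfree)

lemma summable_Z: "summable (\<lambda>j. dig j (\<omega> j) / bb ^ Suc j)"
  using tail_bound(1)[of bb "\<lambda>j. dig j (\<omega> j)" m 0] rr_gt2 dig_norm by (simp add: bb_norm)

lemma Z_approx: "cmod (Z \<omega> - gk L \<omega> / bb ^ L) \<le> m / rr ^ L"
proof -
  let ?e = "\<lambda>j. if j < L then 0 else dig j (\<omega> j)"
  have "Z \<omega> - gk L \<omega> / bb ^ L = (\<Sum>j. dig j (\<omega> j) / bb ^ Suc j) - (\<Sum>j<L. dig j (\<omega> j) / bb ^ Suc j)"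
    by (simp add: Z_def gk_def GI_partial[OF bb_nz] del: power_Suc)
  also have "\<dots> = (\<Sum>j. ?e j / bb ^ Suc j)"
  proof -
    have s1: "(\<lambda>j. ?e j / bb ^ Suc j) sums (\<Sum>j. ?e j / bb ^ Suc j)"
      using tail_bound(1)[of bb ?e m L] rr_gt2 dig_norm by (intro summable_sums) (simp add: bb_norm)
    have s2: "(\<lambda>j. if j < L then dig j (\<omega> j) / bb ^ Suc j else 0) sums (\<Sum>j<L. dig j (\<omega> j) / bb ^ Suc j)"
      using sums_If_finite_set[of "{..<L}" "\<lambda>j. dig j (\<omega> j) / bb ^ Suc j"] by (simp add: lessThan_def)
    have "(\<lambda>j. dig j (\<omega> j) / bb ^ Suc j) sums ((\<Sum>j. ?e j / bb ^ Suc j) + (\<Sum>j<L. dig j (\<omega> j) / bb ^ Suc j))"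
    proof -
      have "(\<lambda>j. ?e j / bb ^ Suc j + (if j < L then dig j (\<omega> j) / bb ^ Suc j else 0)) = (\<lambda>j. dig j (\<omega> j) / bb ^ Suc j)"
        by auto
      with sums_add[OF s1 s2] show ?thesis by simp
    qed
    hence "(\<Sum>j. dig j (\<omega> j) / bb ^ Suc j) = (\<Sum>j. ?e j / bb ^ Suc j) + (\<Sum>j<L. dig j (\<omega> j) / bb ^ Suc j)"
      by (rule sums_unique[symmetric])
    thus ?thesis by simp
  qed
  also have "cmod \<dots> \<le> m / rr ^ L"
    using tail_bound(2)[of bb ?e m L] rr_gt2 dig_norm by (simp add: bb_norm)
  finally show ?thesis .
qed

lemma Z_same_prefix:
  assumes "restrict \<omega> (J L) = restrict \<omega>' (J L)"
  shows "cmod (Z \<omega> - Z \<omega>') \<le> m / rr ^ L"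
proof -
  let ?e = "\<lambda>j. dig j (\<omega> j) - dig j (\<omega>' j)"
  have e0: "?e j = 0" if "j < L" for j
  proof (cases "s j = 0")
    case True
    then have "\<omega> j = \<omega>' j" using that fun_cong[OF assms, of j] by (auto simp: J_def)
    then show ?thesis by simp
  qed (simp add: dig_nfree)
  have en: "cmod (?e j) \<le> m" for j
    using dig_in[of j "\<omega> j"] dig_in[of j "\<omega>' j"] by auto
  have "Z \<omega> - Z \<omega>' = (\<Sum>j. ?e j / bb ^ Suc j)"
    unfolding Z_def diff_divide_distrib using summable_Z[of \<omega>] summable_Z[of \<omega>']
    by (rule suminf_diff)
  also have "cmod \<dots> \<le> m / rr ^ L"
    using tail_bound(2)[of bb ?e m L] rr_gt2 en e0 by (simp add: bb_norm)
  finally show ?thesis .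
qed

end

context cset begin

definition V :: "nat \<Rightarrow> complex set \<Rightarrow> (nat \<Rightarrow> bool) set" where
  "V L U = {restrict \<omega> (J L) | \<omega>. Z \<omega> \<in> U}"

definition K :: nat where "K = (4 * m + 3) ^ 2"

lemma V_sub: "V L U \<subseteq> PiE (J L) (\<lambda>_. UNIV)"
  by (auto simp: V_def)

lemma finite_PiE_J: "finite (PiE (J L) (\<lambda>_. UNIV :: bool set))"
  by (intro finite_PiE) auto

lemma card_PiE_J: "card (PiE (J L) (\<lambda>_. UNIV :: bool set)) = 2 ^ N L"
  by (simp add: card_PiE N_def)

lemma finite_V: "finite (V L U)"
  using finite_subset[OF V_sub finite_PiE_J] .

lemma gint_gk: "gint (gk L v)"
  unfolding gk_def by (rule gint_GI) (auto simp: gint_def bb_def dig_def)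

lemma gint_eq: "gint z \<Longrightarrow> gint w \<Longrightarrow> \<lfloor>Re z\<rfloor> = \<lfloor>Re w\<rfloor> \<Longrightarrow> \<lfloor>Im z\<rfloor> = \<lfloor>Im w\<rfloor> \<Longrightarrow> z = w"
  by (auto simp: gint_def complex_eq_iff elim!: Ints_cases)

lemma gint_floor: "gint z \<Longrightarrow> of_int \<lfloor>Re z\<rfloor> = Re z \<and> of_int \<lfloor>Im z\<rfloor> = Im z"
  by (auto simp: gint_def elim!: Ints_cases)

lemma card_V:
  assumes U: "\<And>x y. x \<in> U \<Longrightarrow> y \<in> U \<Longrightarrow> cmod (x - y) \<le> 1 / rr ^ L"
  shows "card (V L U) \<le> K"
proof (cases "V L U = {}")
  case True then show ?thesis by simp
next
  case False
  then obtain \<omega>0 where w0: "Z \<omega>0 \<in> U" by (auto simp: V_def)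
  define R :: int where "R = 2 * int m + 1"
  define h where "h v = (\<lfloor>Re (gk L v)\<rfloor>, \<lfloor>Im (gk L v)\<rfloor>)" for v
  define x0 where "x0 = \<lfloor>Re (gk L \<omega>0)\<rfloor>"
  define y0 where "y0 = \<lfloor>Im (gk L \<omega>0)\<rfloor>"
  have inj: "inj_on h (V L U)"
  proof (rule inj_onI)
    fix v v' assume "v \<in> V L U" "v' \<in> V L U" "h v = h v'"
    then show "v = v'" using V_sub gk_inj[of v L v'] gint_eq[OF gint_gk gint_gk] by (auto simp: h_def)
  qed
  have dist: "cmod (gk L \<omega> - gk L \<omega>0) \<le> 2 * m + 1" if "Z \<omega> \<in> U" for \<omega>
  proof -
    have rL: "rr ^ L > 0" using rr_pos by simp
    have "cmod (gk L \<omega> / bb ^ L - gk L \<omega>0 / bb ^ L) \<le>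
        cmod (Z \<omega> - gk L \<omega> / bb ^ L) + cmod (Z \<omega> - Z \<omega>0) + cmod (Z \<omega>0 - gk L \<omega>0 / bb ^ L)"
    proof -
      have "gk L \<omega> / bb ^ L - gk L \<omega>0 / bb ^ L = - (Z \<omega> - gk L \<omega> / bb ^ L) + (Z \<omega> - Z \<omega>0) + (Z \<omega>0 - gk L \<omega>0 / bb ^ L)"
        by simp
      have t: "cmod (a + b + c) \<le> cmod a + cmod b + cmod c" for a b c :: complex
        by (rule order_trans[OF norm_triangle_ineq add_right_mono[OF norm_triangle_ineq]])
      show ?thesis unfolding \<open>gk L \<omega> / bb ^ L - gk L \<omega>0 / bb ^ L = _\<close> using t by (metis norm_minus_cancel)
    qed
    also have "\<dots> \<le> m / rr ^ L + 1 / rr ^ L + m / rr ^ L"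
      using Z_approx[of \<omega> L] Z_approx[of \<omega>0 L] U[OF that w0] by linarith
    finally have "cmod ((gk L \<omega> - gk L \<omega>0) / bb ^ L) \<le> (2 * m + 1) / rr ^ L"
      by (simp add: diff_divide_distrib add_divide_distrib)
    moreover have "cmod ((gk L \<omega> - gk L \<omega>0) / bb ^ L) = cmod (gk L \<omega> - gk L \<omega>0) / rr ^ L"
      by (simp add: norm_divide norm_power bb_norm)
    ultimately show ?thesis using rL by (simp add: divide_le_cancel)
  qed
  have img: "h ` V L U \<subseteq> {x0 - R..x0 + R} \<times> {y0 - R..y0 + R}"
  proof
    fix z assume "z \<in> h ` V L U"
    then obtain \<omega> where w: "Z \<omega> \<in> U" "z = h (restrict \<omega> (J L))" by (auto simp: V_def)
    have d: "cmod (gk L \<omega> - gk L \<omega>0) \<le> 2 * m + 1" using dist[OF w(1)] .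
    have "\<bar>Re (gk L \<omega> - gk L \<omega>0)\<bar> \<le> 2 * m + 1" "\<bar>Im (gk L \<omega> - gk L \<omega>0)\<bar> \<le> 2 * m + 1"
      using d abs_Re_le_cmod abs_Im_le_cmod order_trans by blast+
    moreover have "of_int \<lfloor>Re (gk L \<omega>)\<rfloor> = Re (gk L \<omega>)" "of_int \<lfloor>Im (gk L \<omega>)\<rfloor> = Im (gk L \<omega>)"
       "of_int x0 = Re (gk L \<omega>0)" "of_int y0 = Im (gk L \<omega>0)"
      using gint_floor[OF gint_gk] by (auto simp: x0_def y0_def)
    ultimately have "\<bar>real_of_int (\<lfloor>Re (gk L \<omega>)\<rfloor> - x0)\<bar> \<le> real_of_int R"
        "\<bar>real_of_int (\<lfloor>Im (gk L \<omega>)\<rfloor> - y0)\<bar> \<le> real_of_int R"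
      by (auto simp: R_def)
    hence "\<bar>\<lfloor>Re (gk L \<omega>)\<rfloor> - x0\<bar> \<le> R" "\<bar>\<lfloor>Im (gk L \<omega>)\<rfloor> - y0\<bar> \<le> R"
      by linarith+
    then show "z \<in> {x0 - R..x0 + R} \<times> {y0 - R..y0 + R}"
      using w(2) gk_restrict[of L \<omega>] by (auto simp: h_def)
  qed
  have "card (V L U) \<le> card ({x0 - R..x0 + R} \<times> {y0 - R..y0 + R})"
    by (rule card_inj_on_le[OF inj img]) auto
  also have "\<dots> = K"
  proof -
    have "card {x0 - R..x0 + R} = 4 * m + 3" "card {y0 - R..y0 + R} = 4 * m + 3"
      by (simp_all add: R_def nat_add_distrib)
    then show ?thesis by (simp add: card_cartesian_product K_def power2_eq_square)
  qed
  finally show ?thesis .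
qed

end

definition Mb :: "bool measure" where "Mb = measure_pmf (bernoulli_pmf (1/2))"
definition PP :: "(nat \<Rightarrow> bool) measure" where "PP = PiM UNIV (\<lambda>_. Mb)"

lemma prob_Mb: "prob_space Mb" by (simp add: Mb_def prob_space_measure_pmf)

lemma prob_PP: "prob_space PP"
  unfolding PP_def by (rule prob_space_PiM) (rule prob_Mb)

lemma space_Mb[simp]: "space Mb = UNIV" by (simp add: Mb_def)
lemma sets_Mb[simp]: "sets Mb = UNIV" by (simp add: Mb_def)

lemma space_PP[simp]: "space PP = UNIV"
  by (simp add: PP_def space_PiM)

lemma emeasure_cyl:
  assumes "finite I" "v \<in> PiE I (\<lambda>_. UNIV)"
  shows "emeasure PP {\<omega>. restrict \<omega> I = v} = ennreal ((1/2) ^ card I)"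
proof -
  interpret product_prob_space "\<lambda>_::nat. Mb" UNIV
    unfolding product_prob_space_def product_sigma_finite_def product_prob_space_axioms_def
    using prob_Mb prob_space_imp_sigma_finite by blast
  have e: "{\<omega>. restrict \<omega> I = v} = prod_emb UNIV (\<lambda>_. Mb) I (PiE I (\<lambda>j. {v j}))"
    using assms(2) by (auto simp: prod_emb_def space_PiM PiE_def extensional_def restrict_def fun_eq_iff)
  have "emeasure PP {\<omega>. restrict \<omega> I = v} = (\<Prod>i\<in>I. emeasure Mb {v i})"
    unfolding e PP_def by (rule emeasure_PiM_emb) (use assms in auto)
  also have "\<dots> = (\<Prod>i\<in>I. ennreal (1/2))"
  proof (rule prod.cong[OF refl])
    fix i show "emeasure Mb {v i} = ennreal (1/2)"
      by (cases "v i") (simp_all add: Mb_def emeasure_pmf_single)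
  qed
  also have "\<dots> = ennreal ((1/2) ^ card I)" by (subst prod_constant) (rule ennreal_power, simp)
  finally show ?thesis .
qed

lemma meas_comp: "(\<lambda>\<omega>. \<omega> j) \<in> measurable PP Mb"
  unfolding PP_def by (rule measurable_component_singleton) simp

context cset begin

lemma Z_meas: "Z \<in> borel_measurable PP"
proof (rule borel_measurable_LIMSEQ_metric)
  fix i
  show "(\<lambda>\<omega>. \<Sum>j<i. dig j (\<omega> j) / bb ^ Suc j) \<in> borel_measurable PP"
  proof (intro borel_measurable_sum)
    fix j
    have "(\<lambda>x. dig j x / bb ^ Suc j) \<in> borel_measurable Mb" by (simp add: Mb_def)
    then show "(\<lambda>\<omega>. dig j (\<omega> j) / bb ^ Suc j) \<in> borel_measurable PP"
      using measurable_comp[OF meas_comp] by (simp add: comp_def)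
  qed
next
  fix \<omega> show "(\<lambda>i. \<Sum>j<i. dig j (\<omega> j) / bb ^ Suc j) \<longlonglongrightarrow> Z \<omega>"
    unfolding Z_def using summable_Z by (intro summable_LIMSEQ)
qed

lemma cyl_meas: "finite I \<Longrightarrow> {\<omega>. restrict \<omega> I = v} \<in> sets PP"
proof -
  assume I: "finite I"
  show ?thesis
  proof (cases "v \<in> PiE I (\<lambda>_. UNIV)")
    case True
    then have "{\<omega>. restrict \<omega> I = v} = {\<omega> \<in> space PP. \<forall>j\<in>I. \<omega> j = v j}"
      by (auto simp: restrict_def fun_eq_iff PiE_def extensional_def)
    also have "\<dots> \<in> sets PP"
    proof (rule sets.sets_Collect_finite_All[OF _ I])
      fix j
      have "{\<omega> \<in> space PP. \<omega> j = v j} = (\<lambda>\<omega>. \<omega> j) -` {v j} \<inter> space PP" by auto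
      also have "\<dots> \<in> sets PP" by (rule measurable_sets[OF meas_comp]) simp
      finally show "{\<omega> \<in> space PP. \<omega> j = v j} \<in> sets PP" .
    qed
    finally show ?thesis .
  next
    case False
    then have "{\<omega>. restrict \<omega> I = v} = {}" by auto
    then show ?thesis by simp
  qed
qed

lemma frost0:
  assumes U: "\<And>x y. x \<in> U \<Longrightarrow> y \<in> U \<Longrightarrow> cmod (x - y) \<le> 1 / rr ^ L"
  shows "emeasure PP (Z -` U) \<le> ennreal (real K * (1/2) ^ N L)"
proof -
  have "Z -` U \<subseteq> (\<Union>v\<in>V L U. {\<omega>. restrict \<omega> (J L) = v})" by (auto simp: V_def)
  hence "emeasure PP (Z -` U) \<le> emeasure PP (\<Union>v\<in>V L U. {\<omega>. restrict \<omega> (J L) = v})"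
    by (intro emeasure_mono) (auto intro!: sets.finite_UN finite_V cyl_meas)
  also have "\<dots> \<le> (\<Sum>v\<in>V L U. emeasure PP {\<omega>. restrict \<omega> (J L) = v})"
    by (intro emeasure_subadditive_finite finite_V) (auto intro!: cyl_meas)
  also have "\<dots> = (\<Sum>v\<in>V L U. ennreal ((1/2) ^ N L))"
  proof (rule sum.cong[OF refl])
    fix v assume "v \<in> V L U"
    then have "v \<in> PiE (J L) (\<lambda>_. UNIV)" using V_sub by blast
    then show "emeasure PP {\<omega>. restrict \<omega> (J L) = v} = ennreal ((1/2) ^ N L)"
      using emeasure_cyl[OF finite_J] by (simp add: N_def)
  qed
  also have "\<dots> = ennreal (real (card (V L U)) * (1/2) ^ N L)"
    by (simp add: ennreal_of_nat_eq_real_of_nat ennreal_mult)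
  also have "\<dots> \<le> ennreal (real K * (1/2) ^ N L)"
    using card_V[OF U] by (intro ennreal_leI mult_right_mono) auto
  finally show ?thesis .
qed

definition dd :: real where "dd = f * ln 2 / ln rr"

lemma ln_rr: "ln rr > 0" using rr_gt2 by simp

lemma B0: "B \<ge> 0" using N_bound[of 0] by simp

lemma dd0: "dd \<ge> 0" using f0 ln_rr by (simp add: dd_def)

lemma two_powr_f: "2 powr (f * x) = rr powr (dd * x)"
  using ln_rr rr_pos by (simp add: powr_def dd_def)

lemma half_pow_le:
  assumes "\<sigma> \<le> dd" "0 \<le> \<sigma>"
  shows "(1/2::real) ^ N L \<le> 2 powr B * rr powr (- (real L * \<sigma>))"
proof -
  have "(1/2::real) ^ N L = 2 powr (- real (N L))"
    by (simp add: powr_minus powr_realpow power_one_over inverse_eq_divide)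
  also have "\<dots> \<le> 2 powr (B + f * (- real L))"
    using N_bound[of L] by (intro powr_mono) auto
  also have "\<dots> = 2 powr B * rr powr (dd * (- real L))"
    by (simp only: powr_add two_powr_f)
  also have "\<dots> \<le> 2 powr B * rr powr (- (real L * \<sigma>))"
    using assms rr_gt2 by (intro mult_left_mono powr_mono) (auto simp: mult_right_mono mult.commute[of "real L"])
  finally show ?thesis .
qed

lemma two_pow_le: "(2::real) ^ N L \<le> 2 powr B * rr powr (dd * real L)"
proof -
  have "(2::real) ^ N L = 2 powr (real (N L))"
    by (simp add: powr_realpow)
  also have "\<dots> \<le> 2 powr (B + f * real L)"
    using N_bound[of L] by (intro powr_mono) auto
  also have "\<dots> = 2 powr B * rr powr (dd * real L)"
    by (simp add: powr_add two_powr_f)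
  finally show ?thesis .
qed

lemma two_pow_ge: "(2::real) ^ N L \<ge> 2 powr (-B) * rr powr (dd * real L)"
proof -
  have "2 powr (-B) * rr powr (dd * real L) = 2 powr (-B + f * real L)"
    by (simp only: powr_add two_powr_f)
  also have "\<dots> \<le> 2 powr (real (N L))"
    using N_bound[of L] by (intro powr_mono) auto
  also have "\<dots> = 2 ^ N L"
    by (simp add: powr_realpow)
  finally show ?thesis .
qed

end

lemma diam_pow_nonneg: "diam_pow s U \<ge> 0"
  by (simp add: diam_pow_def)

context cset begin

lemma level:
  assumes "0 < t" "t \<le> 1"
  shows "\<exists>L. 1 / rr ^ Suc L < t \<and> t \<le> 1 / rr ^ L"
proof -
  define x where "x = - ln t / ln rr"
  have "ln t \<le> 0" using assms by simp
  hence x0: "x \<ge> 0" using ln_rr unfolding x_def by (simp add: divide_nonpos_pos)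
  define L where "L = nat \<lfloor>x\<rfloor>"
  have L1: "real L \<le> x" "x < real L + 1" using x0 by (auto simp: L_def)
  have pw: "1 / rr ^ k = rr powr (- real k)" for k
    using rr_pos by (simp add: powr_minus powr_realpow divide_inverse)
  have tx: "t = rr powr (- x)"
    using assms ln_rr rr_pos by (simp add: x_def powr_def)
  have "1 / rr ^ Suc L < t"
    unfolding pw tx using L1 rr_gt2 by (intro powr_less_mono) auto
  moreover have "t \<le> 1 / rr ^ L"
    unfolding pw tx using L1 rr_gt2 by (intro powr_mono) auto
  ultimately show ?thesis by blast
qed

definition Cf :: "real \<Rightarrow> real" where "Cf \<sigma> = real K * 2 powr B * rr powr \<sigma>"

lemma K_ge1: "K \<ge> 1" by (simp add: K_def)

lemma Cf_ge1: "\<sigma> \<ge> 0 \<Longrightarrow> Cf \<sigma> \<ge> 1"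
proof -
  assume "\<sigma> \<ge> 0"
  have "2 powr B \<ge> 1" using B0 by (simp add: ge_one_powr_ge_zero)
  moreover have "rr powr \<sigma> \<ge> 1" using rr_gt2 \<open>\<sigma> \<ge> 0\<close> by (simp add: ge_one_powr_ge_zero)
  moreover have "real K \<ge> 1" using K_ge1 by simp
  ultimately show ?thesis unfolding Cf_def
    by (metis mult_mono' mult_1 zero_le_one order_trans)
qed

lemma emeasure_le1: "emeasure PP A \<le> 1"
proof -
  interpret prob_space PP by (rule prob_PP)
  show ?thesis by (rule emeasure_le_1)
qed

lemma frost_level:
  assumes "0 \<le> \<sigma>" "\<sigma> \<le> dd" "\<And>x y. x \<in> U \<Longrightarrow> y \<in> U \<Longrightarrow> cmod (x - y) \<le> 1 / rr ^ L"
  shows "emeasure PP (Z -` U) \<le> ennreal (real K * 2 powr B * rr powr (- (real L * \<sigma>)))"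
proof -
  have "emeasure PP (Z -` U) \<le> ennreal (real K * (1/2) ^ N L)" by (rule frost0[OF assms(3)])
  also have "\<dots> \<le> ennreal (real K * (2 powr B * rr powr (- (real L * \<sigma>))))"
    using half_pow_le[OF assms(2,1)] by (intro ennreal_leI mult_left_mono) auto
  finally show ?thesis by (simp add: mult.assoc)
qed

lemma frost:
  assumes s: "0 \<le> \<sigma>" "\<sigma> \<le> dd" and U: "bounded U" "diameter U \<le> 1"
  shows "emeasure PP (Z -` U) \<le> ennreal (Cf \<sigma> * diam_pow \<sigma> U)"
proof (cases "U = {}")
  case True then show ?thesis by simp
next
  case ne: False
  define t where "t = diameter U"
  have pw: "cmod (x - y) \<le> t" if "x \<in> U" "y \<in> U" for x y
    using diameter_bounded_bound[OF U(1) that] by (simp add: t_def dist_norm)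
  have t0: "t \<ge> 0" using pw ne by force
  show ?thesis
  proof (cases "t > 0")
    case True
    obtain L where L: "1 / rr ^ Suc L < t" "t \<le> 1 / rr ^ L" using level[OF True] U(2) t_def by auto
    have "emeasure PP (Z -` U) \<le> ennreal (real K * 2 powr B * rr powr (- (real L * \<sigma>)))"
      using frost_level[OF s] pw L(2) by (meson order_trans)
    also have "rr powr (- (real L * \<sigma>)) = rr powr \<sigma> * (rr powr (- real (Suc L))) powr \<sigma>"
      using rr_pos by (simp add: powr_powr powr_add[symmetric] algebra_simps)
    also have "(rr powr (- real (Suc L))) powr \<sigma> \<le> t powr \<sigma>"
    proof -
      have "rr powr (- real (Suc L)) = 1 / rr ^ Suc L"
        using rr_pos by (simp add: powr_minus powr_realpow divide_inverse del: of_nat_Suc)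
      then show ?thesis using L(1) s rr_pos by (intro powr_mono2) (auto simp del: power_Suc)
    qed
    also have "t powr \<sigma> = diam_pow \<sigma> U" using ne True by (simp add: diam_pow_def t_def)
    finally show ?thesis
      using B0 rr_pos by (simp add: Cf_def ennreal_leI mult_left_mono mult.assoc order_trans)
  next
    case False
    hence t00: "t = 0" using t0 by simp
    show ?thesis
    proof (cases "\<sigma> = 0")
      case True
      then have "ennreal (Cf \<sigma> * diam_pow \<sigma> U) \<ge> 1" using ne Cf_ge1[of 0] by (simp add: diam_pow_def)
      then show ?thesis using emeasure_le1 order_trans by blast
    next
      case False
      hence sp: "\<sigma> > 0" using s by simp
      define q where "q = rr powr (- \<sigma>)"
      have q1: "q < 1" using powr_less_cancel_iff[of rr "- \<sigma>" 0] rr_gt2 sp by (simp add: q_def)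
      have q: "0 < q" "q < 1" using rr_gt2 q1 by (auto simp: q_def)
      have le: "emeasure PP (Z -` U) \<le> ennreal (real K * 2 powr B * q ^ L)" for L
      proof -
        have "emeasure PP (Z -` U) \<le> ennreal (real K * 2 powr B * rr powr (- (real L * \<sigma>)))"
          using frost_level[OF s, of U L] pw t00 rr_pos by fastforce
        also have "rr powr (- (real L * \<sigma>)) = q ^ L"
          using rr_pos by (simp add: q_def powr_powr[symmetric] powr_realpow[symmetric] mult.commute powr_powr)
        finally show ?thesis .
      qed
      have lim: "(\<lambda>L. ennreal (real K * 2 powr B * q ^ L)) \<longlonglongrightarrow> ennreal 0"
        using q by (intro tendsto_ennrealI tendsto_mult_right_zero LIMSEQ_power_zero) auto
      have "emeasure PP (Z -` U) \<le> 0"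
        using LIMSEQ_le_const[OF lim, of "emeasure PP (Z -` U)"] le by auto
      then show ?thesis by simp
    qed
  qed
qed

end

lemma packing_pre_mono:
  assumes "A \<subseteq> A'" "\<delta> \<le> \<delta>'"
  shows "packing_pre s \<delta> A \<le> packing_pre s \<delta>' A'"
  unfolding packing_pre_def
proof (rule SUP_subset_mono)
  show "{P. finite P \<and> P \<subseteq> A \<times> {0<..\<delta>} \<and> disjoint_family_on (\<lambda>(c, r). cball c r) P}
    \<subseteq> {P. finite P \<and> P \<subseteq> A' \<times> {0<..\<delta>'} \<and> disjoint_family_on (\<lambda>(c, r). cball c r) P}"
    using assms by fastforce
qed simp

lemma packing_zero_mono: "A \<subseteq> A' \<Longrightarrow> packing_zero s A \<le> packing_zero s A'"
  unfolding packing_zero_def by (intro INF_mono) (use packing_pre_mono in blast)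

context cset begin

lemma Z_meas_set: "closed U \<Longrightarrow> Z -` U \<in> sets PP"
  using measurable_sets[OF Z_meas, of U] by simp

lemma haus_lower:
  assumes s: "0 \<le> \<sigma>" "\<sigma> \<le> dd"
  shows "hausdorff_measure \<sigma> (range Z) > 0"
proof -
  have C: "Cf \<sigma> \<ge> 1" using Cf_ge1 s by simp
  have cont: "ennreal (1 / Cf \<sigma>) \<le> hausdorff_content \<sigma> 1 (range Z)"
    unfolding hausdorff_content_def
  proof (rule INF_greatest)
    fix U :: "nat \<Rightarrow> complex set"
    assume "U \<in> {U. range Z \<subseteq> (\<Union>i. U i) \<and> (\<forall>i. bounded (U i) \<and> diameter (U i) \<le> 1)}"
    then have cov: "range Z \<subseteq> (\<Union>i. U i)" and bd: "\<And>i. bounded (U i)" "\<And>i. diameter (U i) \<le> 1" by auto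
    have "1 = emeasure PP (space PP)" using prob_space.emeasure_space_1[OF prob_PP] by simp
    also have "space PP = (\<Union>i. Z -` closure (U i))"
    proof -
      have "\<exists>i. \<omega> \<in> Z -` closure (U i)" for \<omega>
      proof -
        have "Z \<omega> \<in> (\<Union>i. U i)" using cov by auto
        then obtain i where "Z \<omega> \<in> U i" by auto
        then show ?thesis using closure_subset by blast
      qed
      then show ?thesis by auto
    qed
    also have "emeasure PP (\<Union>i. Z -` closure (U i)) \<le> (\<Sum>i. emeasure PP (Z -` closure (U i)))"
      by (rule emeasure_subadditive_countably) (auto intro: Z_meas_set)
    also have "\<dots> \<le> (\<Sum>i. ennreal (Cf \<sigma> * diam_pow \<sigma> (U i)))"
    proof (rule suminf_le)
      fix i
      have "diam_pow \<sigma> (closure (U i)) = diam_pow \<sigma> (U i)"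
        using diameter_closure[OF bd(1)] by (simp add: diam_pow_def)
      then show "emeasure PP (Z -` closure (U i)) \<le> ennreal (Cf \<sigma> * diam_pow \<sigma> (U i))"
        using frost[OF s, of "closure (U i)"] bd(2)[of i] diameter_closure[OF bd(1)] bounded_closure[OF bd(1)] by simp
    qed auto
    also have "\<dots> = ennreal (Cf \<sigma>) * (\<Sum>i. ennreal (diam_pow \<sigma> (U i)))"
      using C by (simp add: ennreal_mult diam_pow_nonneg)
    finally have le: "1 \<le> ennreal (Cf \<sigma>) * (\<Sum>i. ennreal (diam_pow \<sigma> (U i)))" .
    have "ennreal (1 / Cf \<sigma>) = ennreal (1 / Cf \<sigma>) * 1" by simp
    also have "\<dots> \<le> ennreal (1 / Cf \<sigma>) * (ennreal (Cf \<sigma>) * (\<Sum>i. ennreal (diam_pow \<sigma> (U i))))"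
      by (intro mult_left_mono le) auto
    also have "\<dots> = (\<Sum>i. ennreal (diam_pow \<sigma> (U i)))"
      using C by (simp add: mult.assoc[symmetric] ennreal_mult[symmetric])
    finally show "ennreal (1 / Cf \<sigma>) \<le> (\<Sum>i. ennreal (diam_pow \<sigma> (U i)))" .
  qed
  also have "\<dots> \<le> hausdorff_measure \<sigma> (range Z)"
    unfolding hausdorff_measure_def by (rule SUP_upper) simp
  finally have "ennreal (1 / Cf \<sigma>) \<le> hausdorff_measure \<sigma> (range Z)" .
  moreover have "0 < ennreal (1 / Cf \<sigma>)" using C by simp
  ultimately show ?thesis by (rule order.strict_trans2[rotated])
qed

lemma small_level: "\<epsilon> > 0 \<Longrightarrow> \<exists>L. real m / rr ^ L < \<epsilon>"
proof -
  assume e: "\<epsilon> > 0"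
  have "(\<lambda>L. real m * (1 / rr) ^ L) \<longlonglongrightarrow> real m * 0"
    using rr_gt2 by (intro tendsto_mult tendsto_const LIMSEQ_power_zero) auto
  then have "eventually (\<lambda>L. real m * (1 / rr) ^ L < \<epsilon>) sequentially"
    using e by (intro order_tendstoD(2)) auto
  then obtain L where "real m * (1 / rr) ^ L < \<epsilon>" using eventually_sequentially by auto
  then show ?thesis by (auto simp: power_one_over divide_inverse power_inverse)
qed

lemma sep_bound:
  assumes "\<delta> > 0"
  shows "\<exists>M. \<forall>X. X \<subseteq> range Z \<and> (\<forall>x\<in>X. \<forall>y\<in>X. x \<noteq> y \<longrightarrow> \<delta> < dist x y) \<longrightarrow> finite X \<and> card X \<le> M"
proof -
  obtain L where L: "real m / rr ^ L < \<delta>" using small_level assms by blast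
  define g where "g x = restrict (SOME \<omega>. Z \<omega> = x) (J L)" for x
  have "finite X \<and> card X \<le> 2 ^ N L"
    if X: "X \<subseteq> range Z" "\<forall>x\<in>X. \<forall>y\<in>X. x \<noteq> y \<longrightarrow> \<delta> < dist x y" for X
  proof -
    have Zs: "Z (SOME \<omega>. Z \<omega> = x) = x" if "x \<in> X" for x
    proof -
      have "\<exists>\<omega>. Z \<omega> = x" using X(1) that by blast
      then show ?thesis by (rule someI_ex)
    qed
    have inj: "inj_on g X"
    proof (rule inj_onI, rule ccontr)
      fix x y assume xy: "x \<in> X" "y \<in> X" "g x = g y" "x \<noteq> y"
      have "cmod (Z (SOME \<omega>. Z \<omega> = x) - Z (SOME \<omega>. Z \<omega> = y)) \<le> m / rr ^ L"
        using xy(3) by (intro Z_same_prefix) (simp add: g_def)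
      then have "dist x y < \<delta>" using Zs xy(1,2) L by (simp add: dist_norm)
      then show False using X(2) xy by force
    qed
    have sub: "g ` X \<subseteq> PiE (J L) (\<lambda>_. UNIV)" by (auto simp: g_def)
    have "finite (g ` X)" using finite_subset[OF sub finite_PiE_J] .
    then have fin: "finite X" using finite_imageD inj by blast
    have "card X = card (g ` X)" using card_image[OF inj] by simp
    also have "\<dots> \<le> 2 ^ N L" using card_mono[OF finite_PiE_J sub] card_PiE_J by simp
    finally show ?thesis using fin by simp
  qed
  then show ?thesis by blast
qed

definition C2 :: "real \<Rightarrow> real" where "C2 \<sigma> = Cf \<sigma> * 2 powr \<sigma>"

lemma C2_ge1: "\<sigma> \<ge> 0 \<Longrightarrow> C2 \<sigma> \<ge> 1"
proof -
  assume s: "\<sigma> \<ge> 0"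
  have "1 * 1 \<le> Cf \<sigma> * 2 powr \<sigma>"
    using Cf_ge1[OF s] ge_one_powr_ge_zero[of 2 \<sigma>] s by (intro mult_mono) auto
  then show ?thesis by (simp add: C2_def)
qed

lemma pack_pre_lower:
  assumes s: "0 \<le> \<sigma>" "\<sigma> \<le> dd" and A: "A \<subseteq> range Z" and d: "0 < \<delta>" "\<delta> \<le> 1/4"
  shows "emeasure PP (Z -` closure A) \<le> ennreal (C2 \<sigma>) * packing_pre \<sigma> \<delta> A"
proof -
  define Sep where "Sep = {X. X \<subseteq> A \<and> (\<forall>x\<in>X. \<forall>y\<in>X. x \<noteq> y \<longrightarrow> 2 * \<delta> < dist x y)}"
  have d2: "0 < 2 * \<delta>" using d by simp
  obtain M0 where M0: "\<forall>X. X \<subseteq> range Z \<and> (\<forall>x\<in>X. \<forall>y\<in>X. x \<noteq> y \<longrightarrow> 2 * \<delta> < dist x y) \<longrightarrow> finite X \<and> card X \<le> M0"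
    using sep_bound[OF d2] by (elim exE) (rule that)
  have M: "finite X \<and> card X \<le> M0" if "X \<in> Sep" for X
  proof -
    have "X \<subseteq> range Z" "\<forall>x\<in>X. \<forall>y\<in>X. x \<noteq> y \<longrightarrow> 2 * \<delta> < dist x y"
      using A that unfolding Sep_def by auto
    then show ?thesis using M0 by simp
  qed
  have "{} \<in> Sep" by (simp add: Sep_def)
  have "card ` Sep \<subseteq> {..M0}"
  proof
    fix k assume "k \<in> card ` Sep"
    then obtain X where "X \<in> Sep" "k = card X" by blast
    then show "k \<in> {..M0}" using M[of X] by simp
  qed
  then have fin: "finite (card ` Sep)" by (rule finite_subset) simp
  define k where "k = Max (card ` Sep)"
  have "k \<in> card ` Sep" unfolding k_def using fin \<open>{} \<in> Sep\<close> by (intro Max_in) auto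
  then obtain X where X: "X \<in> Sep" "card X = k" by blast
  have maxX: "card Y \<le> card X" if "Y \<in> Sep" for Y using X fin that by (simp add: k_def)
  have finX: "finite X" using M[OF X(1)] by simp
  have XA: "X \<subseteq> A" using X by (simp add: Sep_def)
  have Xsep: "\<And>x y. x \<in> X \<Longrightarrow> y \<in> X \<Longrightarrow> x \<noteq> y \<Longrightarrow> 2 * \<delta> < dist x y" using X by (simp add: Sep_def)
  have cov: "A \<subseteq> (\<Union>x\<in>X. cball x (2 * \<delta>))"
  proof
    fix a assume a: "a \<in> A"
    show "a \<in> (\<Union>x\<in>X. cball x (2 * \<delta>))"
    proof (rule ccontr)
      assume na: "a \<notin> (\<Union>x\<in>X. cball x (2 * \<delta>))"
      then have far: "\<And>x. x \<in> X \<Longrightarrow> 2 * \<delta> < dist x a" by (auto simp: not_le)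
      have aX: "a \<notin> X" using na d by auto
      have "insert a X \<in> Sep" using XA a Xsep far by (auto simp: Sep_def dist_commute)
      then have "card (insert a X) \<le> card X" by (rule maxX)
      then show False using aX finX by simp
    qed
  qed
  have clA: "closure A \<subseteq> (\<Union>x\<in>X. cball x (2 * \<delta>))"
    by (rule closure_minimal[OF cov]) (use finX in auto)
  have dp: "diam_pow \<sigma> (cball x (2 * \<delta>)) = (4 * \<delta>) powr \<sigma>" for x :: complex
    using d by (auto simp: diam_pow_def)
  have "emeasure PP (Z -` closure A) \<le> emeasure PP (\<Union>x\<in>X. Z -` cball x (2 * \<delta>))"
  proof (rule emeasure_mono)
    show "Z -` closure A \<subseteq> (\<Union>x\<in>X. Z -` cball x (2 * \<delta>))" using clA by blast
    show "(\<Union>x\<in>X. Z -` cball x (2 * \<delta>)) \<in> sets PP"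
      using finX by (intro sets.finite_UN) (auto intro: Z_meas_set)
  qed
  also have "\<dots> \<le> (\<Sum>x\<in>X. emeasure PP (Z -` cball x (2 * \<delta>)))"
    by (intro emeasure_subadditive_finite finX) (auto intro!: Z_meas_set)
  also have "\<dots> \<le> (\<Sum>x\<in>X. ennreal (Cf \<sigma> * (4 * \<delta>) powr \<sigma>))"
  proof (rule sum_mono)
    fix x
    show "emeasure PP (Z -` cball x (2 * \<delta>)) \<le> ennreal (Cf \<sigma> * (4 * \<delta>) powr \<sigma>)"
      using frost[OF s, of "cball x (2 * \<delta>)"] d dp by simp
  qed
  also have "\<dots> = of_nat (card X) * ennreal (C2 \<sigma> * (2 * \<delta>) powr \<sigma>)"
  proof -
    have "(4 * \<delta>) powr \<sigma> = 2 powr \<sigma> * (2 * \<delta>) powr \<sigma>"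
      using d by (simp add: powr_mult[symmetric])
    then show ?thesis by (simp add: C2_def mult.assoc)
  qed
  also have "\<dots> = ennreal (C2 \<sigma>) * (\<Sum>(c, r)\<in>(\<lambda>x. (x, \<delta>)) ` X. ennreal ((2 * r) powr \<sigma>))"
  proof -
    have "(\<Sum>(c, r)\<in>(\<lambda>x. (x, \<delta>)) ` X. ennreal ((2 * r) powr \<sigma>)) = (\<Sum>x\<in>X. ennreal ((2 * \<delta>) powr \<sigma>))"
      by (subst sum.reindex) (auto simp: inj_on_def)
    also have "\<dots> = of_nat (card X) * ennreal ((2 * \<delta>) powr \<sigma>)" by simp
    finally show ?thesis using C2_ge1[OF s(1)]
      by (simp add: ennreal_mult mult.commute mult.left_commute)
  qed
  also have "\<dots> \<le> ennreal (C2 \<sigma>) * packing_pre \<sigma> \<delta> A"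
  proof (intro mult_left_mono)
    show "(\<Sum>(c, r)\<in>(\<lambda>x. (x, \<delta>)) ` X. ennreal ((2 * r) powr \<sigma>)) \<le> packing_pre \<sigma> \<delta> A"
      unfolding packing_pre_def
    proof (rule SUP_upper)
      have "disjoint_family_on (\<lambda>(c, r). cball c r) ((\<lambda>x. (x, \<delta>)) ` X)"
      proof (clarsimp simp: disjoint_family_on_def)
        fix x y assume "x \<in> X" "y \<in> X" "x \<noteq> y"
        then have "2 * \<delta> < dist x y" using Xsep by blast
        show "cball x \<delta> \<inter> cball y \<delta> = {}"
        proof (rule ccontr)
          assume "cball x \<delta> \<inter> cball y \<delta> \<noteq> {}"
          then obtain z where "dist x z \<le> \<delta>" "dist y z \<le> \<delta>" by (auto simp: mem_cball)
          then have "dist x y \<le> 2 * \<delta>" using dist_triangle2[of x y z] by linarith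
          then show False using \<open>2 * \<delta> < dist x y\<close> by linarith
        qed
      qed
      then show "(\<lambda>x. (x, \<delta>)) ` X \<in> {P. finite P \<and> P \<subseteq> A \<times> {0<..\<delta>} \<and> disjoint_family_on (\<lambda>(c, r). cball c r) P}"
        using finX XA d by auto
    qed
  qed simp
  finally show ?thesis .
qed

lemma ennreal_inv_cancel: "c \<ge> 1 \<Longrightarrow> ennreal (1 / c) * (ennreal c * x) = x"
  by (simp add: mult.assoc[symmetric] ennreal_mult[symmetric])

lemma pack_zero_lower:
  assumes s: "0 \<le> \<sigma>" "\<sigma> \<le> dd" and A: "A \<subseteq> range Z"
  shows "ennreal (1 / C2 \<sigma>) * emeasure PP (Z -` closure A) \<le> packing_zero \<sigma> A"
  unfolding packing_zero_def
proof (rule INF_greatest)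
  fix \<delta> :: real assume "\<delta> \<in> {0<..}"
  then have d: "0 < min \<delta> (1/4)" "min \<delta> (1/4) \<le> 1/4" by auto
  have "emeasure PP (Z -` closure A) \<le> ennreal (C2 \<sigma>) * packing_pre \<sigma> (min \<delta> (1/4)) A"
    by (rule pack_pre_lower[OF s A d])
  also have "\<dots> \<le> ennreal (C2 \<sigma>) * packing_pre \<sigma> \<delta> A"
    by (intro mult_left_mono packing_pre_mono) auto
  finally have "ennreal (1 / C2 \<sigma>) * emeasure PP (Z -` closure A)
      \<le> ennreal (1 / C2 \<sigma>) * (ennreal (C2 \<sigma>) * packing_pre \<sigma> \<delta> A)"
    by (rule mult_left_mono) simp
  also have "\<dots> = packing_pre \<sigma> \<delta> A" using C2_ge1[OF s(1)] by (rule ennreal_inv_cancel)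
  finally show "ennreal (1 / C2 \<sigma>) * emeasure PP (Z -` closure A) \<le> packing_pre \<sigma> \<delta> A" .
qed

lemma pack_lower:
  assumes s: "0 \<le> \<sigma>" "\<sigma> \<le> dd"
  shows "packing_measure \<sigma> (range Z) > 0"
proof -
  have C: "C2 \<sigma> \<ge> 1" using C2_ge1 s by simp
  have "ennreal (1 / C2 \<sigma>) \<le> packing_measure \<sigma> (range Z)"
    unfolding packing_measure_def
  proof (rule INF_greatest)
    fix U :: "nat \<Rightarrow> complex set"
    assume "U \<in> {A. range Z \<subseteq> (\<Union>i. A i)}"
    then have cov: "range Z \<subseteq> (\<Union>i. U i)" by auto
    have "1 = emeasure PP (space PP)" using prob_space.emeasure_space_1[OF prob_PP] by simp
    also have "space PP = (\<Union>i. Z -` closure (U i \<inter> range Z))"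
    proof -
      have "\<exists>i. \<omega> \<in> Z -` closure (U i \<inter> range Z)" for \<omega>
      proof -
        have "Z \<omega> \<in> (\<Union>i. U i)" using cov by (rule subsetD) simp
        then obtain i where i: "Z \<omega> \<in> U i" by (rule UN_E)
        have "Z \<omega> \<in> U i \<inter> range Z" using i by simp
        then have "Z \<omega> \<in> closure (U i \<inter> range Z)" using closure_subset by (rule subsetD[rotated])
        then show ?thesis by (intro exI[of _ i]) simp
      qed
      then show ?thesis by auto
    qed
    also have "emeasure PP (\<Union>i. Z -` closure (U i \<inter> range Z)) \<le> (\<Sum>i. emeasure PP (Z -` closure (U i \<inter> range Z)))"
      by (rule emeasure_subadditive_countably) (auto intro: Z_meas_set)
    finally have le: "1 \<le> (\<Sum>i. emeasure PP (Z -` closure (U i \<inter> range Z)))" .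
    have "ennreal (1 / C2 \<sigma>) = ennreal (1 / C2 \<sigma>) * 1" by simp
    also have "\<dots> \<le> ennreal (1 / C2 \<sigma>) * (\<Sum>i. emeasure PP (Z -` closure (U i \<inter> range Z)))"
      by (intro mult_left_mono le) auto
    also have "\<dots> = (\<Sum>i. ennreal (1 / C2 \<sigma>) * emeasure PP (Z -` closure (U i \<inter> range Z)))"
      by simp
    also have "\<dots> \<le> (\<Sum>i. packing_zero \<sigma> (U i))"
    proof (rule suminf_le)
      fix i
      have "ennreal (1 / C2 \<sigma>) * emeasure PP (Z -` closure (U i \<inter> range Z)) \<le> packing_zero \<sigma> (U i \<inter> range Z)"
        by (rule pack_zero_lower[OF s]) auto
      also have "\<dots> \<le> packing_zero \<sigma> (U i)" by (rule packing_zero_mono) auto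
      finally show "ennreal (1 / C2 \<sigma>) * emeasure PP (Z -` closure (U i \<inter> range Z)) \<le> packing_zero \<sigma> (U i)" .
    qed auto
    finally show "ennreal (1 / C2 \<sigma>) \<le> (\<Sum>i. packing_zero \<sigma> (U i))" .
  qed
  moreover have "0 < ennreal (1 / C2 \<sigma>)" using C by simp
  ultimately show ?thesis by (rule order.strict_trans2[rotated])
qed

end

context cset begin

definition Cyl :: "nat \<Rightarrow> (nat \<Rightarrow> bool) \<Rightarrow> complex set" where
  "Cyl L v = Z ` {\<omega>. restrict \<omega> (J L) = v}"

lemma Cyl_pw: "x \<in> Cyl L v \<Longrightarrow> y \<in> Cyl L v \<Longrightarrow> cmod (x - y) \<le> m / rr ^ L"
  unfolding Cyl_def by (auto intro!: Z_same_prefix)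

lemma Cyl_bounded: "bounded (Cyl L v)"
proof (cases "Cyl L v = {}")
  case False
  then obtain x where x: "x \<in> Cyl L v" by auto
  show ?thesis unfolding bounded_def
    by (rule exI[of _ x], rule exI[of _ "m / rr ^ L"]) (use Cyl_pw x in \<open>auto simp: dist_norm\<close>)
qed simp

lemma Cyl_diam: "diameter (Cyl L v) \<le> m / rr ^ L"
  by (rule diameter_le) (use Cyl_pw rr_pos in auto)

lemma Cyl_cover: "Z \<omega> \<in> Cyl L (restrict \<omega> (J L))"
  by (auto simp: Cyl_def)

lemma restrict_in: "restrict \<omega> (J L) \<in> PiE (J L) (\<lambda>_. UNIV)" by simp

lemma diam_pow_Cyl: "\<sigma> > 0 \<Longrightarrow> diam_pow \<sigma> (Cyl L v) \<le> (m / rr ^ L) powr \<sigma>"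
  using Cyl_diam[of L v] diameter_ge_0[OF Cyl_bounded[of L v]] by (auto simp: diam_pow_def intro!: powr_mono2)

lemma haus_content_le:
  assumes sp: "\<sigma> > 0" and L: "m / rr ^ L \<le> \<delta>"
  shows "hausdorff_content \<sigma> \<delta> (range Z) \<le> ennreal (2 ^ N L * (m / rr ^ L) powr \<sigma>)"
proof -
  let ?V = "PiE (J L) (\<lambda>_. UNIV :: bool set)"
  obtain g where g: "bij_betw g {0..<card ?V} ?V" using ex_bij_betw_nat_finite[OF finite_PiE_J] by blast
  define U where "U i = (if i < card ?V then Cyl L (g i) else {})" for i
  have "range Z \<subseteq> (\<Union>i. U i)"
  proof
    fix z assume "z \<in> range Z"
    then obtain \<omega> where z: "z = Z \<omega>" by auto
    have "restrict \<omega> (J L) \<in> g ` {0..<card ?V}" using g restrict_in[of \<omega> L] unfolding bij_betw_def by simp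
    then obtain i where i: "i < card ?V" "g i = restrict \<omega> (J L)" by auto
    show "z \<in> (\<Union>i. U i)" using Cyl_cover[of \<omega> L] i z by (auto simp: U_def)
  qed
  moreover have "bounded (U i) \<and> diameter (U i) \<le> \<delta>" for i
  proof (cases "i < card ?V")
    case True
    then show ?thesis using Cyl_bounded order_trans[OF Cyl_diam L] by (simp add: U_def)
  next
    case False
    have "0 \<le> m / rr ^ L" using rr_pos by simp
    then show ?thesis using False L by (simp add: U_def)
  qed
  ultimately have "hausdorff_content \<sigma> \<delta> (range Z) \<le> (\<Sum>i. ennreal (diam_pow \<sigma> (U i)))"
    unfolding hausdorff_content_def by (intro INF_lower) auto
  also have "(\<Sum>i. ennreal (diam_pow \<sigma> (U i))) = (\<Sum>i<card ?V. ennreal (diam_pow \<sigma> (U i)))"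
    by (rule suminf_finite) (auto simp: U_def diam_pow_def)
  also have "\<dots> \<le> (\<Sum>i<card ?V. ennreal ((m / rr ^ L) powr \<sigma>))"
    by (intro sum_mono ennreal_leI) (auto simp: U_def diam_pow_Cyl sp)
  also have "\<dots> = ennreal (2 ^ N L * (m / rr ^ L) powr \<sigma>)"
    by (simp add: card_PiE_J ennreal_mult ennreal_of_nat_eq_real_of_nat)
  finally show ?thesis .
qed

lemma haus_upper:
  assumes sp: "\<sigma> > dd"
  shows "hausdorff_measure \<sigma> (range Z) = 0"
proof -
  have s0: "\<sigma> > 0" using sp dd0 by simp
  define q where "q = rr powr (dd - \<sigma>)"
  have q: "0 < q" "q < 1" using powr_less_cancel_iff[of rr "dd - \<sigma>" 0] rr_gt2 sp by (auto simp: q_def)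
  define c where "c = 2 powr B * real m powr \<sigma>"
  have est: "2 ^ N L * (m / rr ^ L) powr \<sigma> \<le> c * q ^ L" for L
  proof -
    have e1: "(m / rr ^ L) powr \<sigma> = real m powr \<sigma> * rr powr (- (\<sigma> * L))"
    proof -
      have "(m / rr ^ L) powr \<sigma> = real m powr \<sigma> / (rr ^ L) powr \<sigma>"
        using rr_pos by (simp add: powr_divide)
      also have "(rr ^ L) powr \<sigma> = rr powr (\<sigma> * L)"
        using rr_pos by (simp add: powr_realpow[symmetric] powr_powr mult.commute)
      finally show ?thesis by (simp add: powr_minus divide_inverse)
    qed
    have e2: "rr powr (dd * real L) * rr powr (- (\<sigma> * L)) = q ^ L"
      using rr_pos by (simp add: q_def powr_add[symmetric] powr_realpow[symmetric] powr_powr algebra_simps)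
    have "2 ^ N L * (m / rr ^ L) powr \<sigma> \<le> (2 powr B * rr powr (dd * real L)) * (m / rr ^ L) powr \<sigma>"
      by (rule mult_right_mono[OF two_pow_le]) simp
    also have "\<dots> = c * (rr powr (dd * real L) * rr powr (- (\<sigma> * L)))"
      unfolding e1 c_def by (simp add: ac_simps)
    also have "\<dots> = c * q ^ L" by (simp only: e2)
    finally show ?thesis .
  qed
  have "hausdorff_content \<sigma> \<delta> (range Z) = 0" if d: "\<delta> > 0" for \<delta>
  proof -
    obtain L0 where L0: "m / rr ^ L0 < \<delta>" using small_level d by blast
    have ev: "\<forall>L\<ge>L0. hausdorff_content \<sigma> \<delta> (range Z) \<le> ennreal (c * q ^ L)"
    proof (intro allI impI)
      fix L assume "L \<ge> L0"
      then have "rr ^ L0 \<le> rr ^ L" using rr_gt2 by (intro power_increasing) auto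
      then have "m / rr ^ L \<le> m / rr ^ L0" using rr_pos by (intro divide_left_mono) auto
      then have "m / rr ^ L \<le> \<delta>" using L0 by linarith
      then have "hausdorff_content \<sigma> \<delta> (range Z) \<le> ennreal (2 ^ N L * (m / rr ^ L) powr \<sigma>)"
        by (rule haus_content_le[OF s0])
      also have "\<dots> \<le> ennreal (c * q ^ L)" by (rule ennreal_leI[OF est])
      finally show "hausdorff_content \<sigma> \<delta> (range Z) \<le> ennreal (c * q ^ L)" .
    qed
    have lim: "(\<lambda>L. ennreal (c * q ^ L)) \<longlonglongrightarrow> ennreal 0"
      using q by (intro tendsto_ennrealI tendsto_mult_right_zero LIMSEQ_power_zero) auto
    have "hausdorff_content \<sigma> \<delta> (range Z) \<le> 0"
      using LIMSEQ_le_const[OF lim, of "hausdorff_content \<sigma> \<delta> (range Z)"] ev by auto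
    then show ?thesis by simp
  qed
  then show ?thesis unfolding hausdorff_measure_def by simp
qed

end

context cset begin

definition lev :: "real \<Rightarrow> nat" where
  "lev r = (SOME L. 1 / rr ^ Suc L < r \<and> r \<le> 1 / rr ^ L)"

lemma lev: "0 < r \<Longrightarrow> r \<le> 1 \<Longrightarrow> 1 / rr ^ Suc (lev r) < r \<and> r \<le> 1 / rr ^ lev r"
  unfolding lev_def by (rule someI_ex) (rule level)

lemma inv_pow_less: "1 / rr ^ a < 1 / rr ^ b \<Longrightarrow> b < a"
proof -
  assume "1 / rr ^ a < 1 / rr ^ b"
  moreover have "rr ^ a > 0" "rr ^ b > 0" using rr_pos by auto
  ultimately have "rr ^ b < rr ^ a" by (simp add: divide_less_eq field_simps)
  then show "b < a" using rr_gt2 by simp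
qed

lemma geo_sum_bound:
  fixes q :: real
  assumes q: "0 < q" "q < 1" and T: "finite T" "T \<subseteq> {L0..}"
  shows "(\<Sum>k\<in>T. q ^ k) \<le> q ^ L0 / (1 - q)"
proof (cases "T = {}")
  case True then show ?thesis using q by simp
next
  case False
  define M where "M = Max T"
  have TM: "T \<subseteq> {L0..M}" using T False by (auto simp: M_def)
  have LM: "L0 \<le> M" using TM False by auto
  have "(\<Sum>k\<in>T. q ^ k) \<le> (\<Sum>k\<in>{L0..M}. q ^ k)"
    using q TM by (intro sum_mono2) auto
  also have "\<dots> = (q ^ L0 - q ^ Suc M) / (1 - q)"
    using sum_gp_multiplied[OF LM, of q] q by (simp add: field_simps)
  also have "\<dots> \<le> q ^ L0 / (1 - q)" using q by (intro divide_right_mono) auto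
  finally show ?thesis .
qed

lemma pack_pre_upper:
  assumes sp: "\<sigma> > dd"
  obtains A0 q where "0 < q" "q < 1" "A0 \<ge> 0"
    "\<And>L0. packing_pre \<sigma> (1 / rr ^ L0) (range Z) \<le> ennreal (A0 * (q ^ L0 / (1 - q)))"
proof -
  have s0: "\<sigma> > 0" using sp dd0 by simp
  define q where "q = rr powr (dd - \<sigma>)"
  have q: "0 < q" "q < 1" using powr_less_cancel_iff[of rr "dd - \<sigma>" 0] rr_gt2 sp by (auto simp: q_def)
  have "0 < 1 / rr" using rr_pos by simp
  then obtain k1 where k1: "m / rr ^ k1 < 1 / rr" using small_level by blast
  define A0 where "A0 = 2 powr B * rr powr (dd * k1) * 2 powr \<sigma>"
  have A0: "A0 \<ge> 0" by (simp add: A0_def)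
  have main: "packing_pre \<sigma> (1 / rr ^ L0) (range Z) \<le> ennreal (A0 * (q ^ L0 / (1 - q)))" for L0
    unfolding packing_pre_def
  proof (rule SUP_least)
    fix P assume "P \<in> {P. finite P \<and> P \<subseteq> range Z \<times> {0<..1 / rr ^ L0} \<and> disjoint_family_on (\<lambda>(c, r). cball c r) P}"
    then have P: "finite P" "P \<subseteq> range Z \<times> {0<..1 / rr ^ L0}" "disjoint_family_on (\<lambda>(c, r). cball c r) P" by auto
    define g where "g p = (2 * snd p) powr \<sigma>" for p :: "complex \<times> real"
    define T where "T = (\<lambda>p. lev (snd p)) ` P"
    have rle1: "1 / rr ^ L0 \<le> 1" using rr_gt2 by (simp add: one_le_power)
    have Pr: "0 < snd p" "snd p \<le> 1 / rr ^ L0" "fst p \<in> range Z" if "p \<in> P" for p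
      using P(2) that by auto
    have lev_p: "1 / rr ^ Suc (lev (snd p)) < snd p" "snd p \<le> 1 / rr ^ lev (snd p)" if "p \<in> P" for p
      using lev[of "snd p"] Pr[OF that] rle1 by auto
    have TL0: "T \<subseteq> {L0..}"
    proof
      fix k assume "k \<in> T"
      then obtain p where p: "p \<in> P" "k = lev (snd p)" by (auto simp: T_def)
      have "1 / rr ^ Suc k < 1 / rr ^ L0" using lev_p(1)[OF p(1)] Pr(2)[OF p(1)] unfolding p(2) by linarith
      then have "L0 < Suc k" by (rule inv_pow_less)
      then show "k \<in> {L0..}" by simp
    qed
    have inner: "(\<Sum>p\<in>{p \<in> P. lev (snd p) = k}. g p) \<le> A0 * q ^ k" for k
    proof -
      let ?Pk = "{p \<in> P. lev (snd p) = k}"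
      define h where "h p = restrict (SOME \<omega>. Z \<omega> = fst p) (J (k + k1))" for p :: "complex \<times> real"
      have Zs: "Z (SOME \<omega>. Z \<omega> = fst p) = fst p" if "p \<in> P" for p
      proof -
        have "\<exists>\<omega>. Z \<omega> = fst p" using Pr(3)[OF that] by auto
        then show ?thesis by (rule someI_ex)
      qed
      have inj: "inj_on h ?Pk"
      proof (rule inj_onI, rule ccontr)
        fix p p' assume pp: "p \<in> ?Pk" "p' \<in> ?Pk" "h p = h p'" "p \<noteq> p'"
        have "cmod (Z (SOME \<omega>. Z \<omega> = fst p) - Z (SOME \<omega>. Z \<omega> = fst p')) \<le> m / rr ^ (k + k1)"
          using pp(3) unfolding h_def by (rule Z_same_prefix)
        then have d1: "dist (fst p) (fst p') \<le> m / rr ^ (k + k1)"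
          using Zs pp(1,2) by (simp add: dist_norm)
        have "m / rr ^ (k + k1) = (m / rr ^ k1) / rr ^ k" by (simp add: power_add field_simps)
        also have "\<dots> < (1 / rr) / rr ^ k" using k1 rr_pos by (intro divide_strict_right_mono) auto
        also have "\<dots> = 1 / rr ^ Suc k" by simp
        also have "\<dots> < snd p" using lev_p(1)[of p] pp(1) by simp
        finally have d2: "dist (fst p) (fst p') < snd p" using d1 by linarith
        have "(\<lambda>(c, r). cball c r) p \<inter> (\<lambda>(c, r). cball c r) p' = {}"
          using P(3) pp(1,2,4) unfolding disjoint_family_on_def by blast
        then have "cball (fst p) (snd p) \<inter> cball (fst p') (snd p') = {}" by (simp add: case_prod_beta)
        moreover have "fst p' \<in> cball (fst p) (snd p)" using d2 by (simp add: mem_cball)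
        moreover have "fst p' \<in> cball (fst p') (snd p')" using Pr(1) pp(2) by (simp add: less_imp_le)
        ultimately show False by blast
      qed
      have sub: "h ` ?Pk \<subseteq> PiE (J (k + k1)) (\<lambda>_. UNIV)" by (auto simp: h_def)
      have card: "real (card ?Pk) \<le> 2 ^ N (k + k1)"
      proof -
        have "card ?Pk = card (h ` ?Pk)" using card_image[OF inj] by simp
        also have "\<dots> \<le> 2 ^ N (k + k1)" using card_mono[OF finite_PiE_J sub] card_PiE_J by simp
        finally show ?thesis by (simp flip: of_nat_power)
      qed
      have gle: "g p \<le> 2 powr \<sigma> * rr powr (- (\<sigma> * k))" if "p \<in> ?Pk" for p
      proof -
        have "g p \<le> (2 * (1 / rr ^ k)) powr \<sigma>"
          unfolding g_def using lev_p(2)[of p] Pr(1)[of p] that s0 by (intro powr_mono2) auto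
        also have "\<dots> = 2 powr \<sigma> * rr powr (- (\<sigma> * k))"
        proof -
          have "(2 * (1 / rr ^ k)) powr \<sigma> = 2 powr \<sigma> * (1 / rr ^ k) powr \<sigma>"
            using rr_pos by (intro powr_mult)
          also have "(1 / rr ^ k) powr \<sigma> = 1 / (rr ^ k) powr \<sigma>"
            using rr_pos by (simp add: powr_divide)
          also have "(rr ^ k) powr \<sigma> = rr powr (\<sigma> * k)"
            using rr_pos by (simp add: powr_realpow[symmetric] powr_powr mult.commute)
          finally show ?thesis by (simp add: powr_minus divide_inverse)
        qed
        finally show ?thesis .
      qed
      have "(\<Sum>p\<in>?Pk. g p) \<le> (\<Sum>p\<in>?Pk. 2 powr \<sigma> * rr powr (- (\<sigma> * k)))"
        by (rule sum_mono) (rule gle)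
      also have "\<dots> = real (card ?Pk) * (2 powr \<sigma> * rr powr (- (\<sigma> * k)))" by simp
      also have "\<dots> \<le> (2 powr B * rr powr (dd * real (k + k1))) * (2 powr \<sigma> * rr powr (- (\<sigma> * k)))"
        using order_trans[OF card two_pow_le[of "k + k1"]] by (intro mult_right_mono) auto
      also have "\<dots> = A0 * (rr powr (dd * real k) * rr powr (- (\<sigma> * k)))"
        unfolding A0_def by (simp add: distrib_left powr_add ac_simps)
      also have "rr powr (dd * real k) * rr powr (- (\<sigma> * k)) = q ^ k"
        using rr_pos by (simp add: q_def powr_add[symmetric] powr_realpow[symmetric] powr_powr algebra_simps)
      finally show ?thesis .
    qed
    have g0: "g p \<ge> 0" for p by (simp add: g_def)
    have "(\<Sum>p\<in>P. g p) = (\<Sum>k\<in>T. \<Sum>p\<in>{p \<in> P. lev (snd p) = k}. g p)"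
      using sum.group[OF P(1), of T "\<lambda>p. lev (snd p)" g] P(1) by (simp add: T_def)
    also have "\<dots> \<le> (\<Sum>k\<in>T. A0 * q ^ k)" by (rule sum_mono) (rule inner)
    also have "\<dots> = A0 * (\<Sum>k\<in>T. q ^ k)" by (simp add: sum_distrib_left)
    also have "\<dots> \<le> A0 * (q ^ L0 / (1 - q))"
      using geo_sum_bound[OF q _ TL0] P(1) A0 by (intro mult_left_mono) (auto simp: T_def)
    finally have R: "(\<Sum>p\<in>P. g p) \<le> A0 * (q ^ L0 / (1 - q))" .
    have "(\<Sum>(c, r)\<in>P. ennreal ((2 * r) powr \<sigma>)) = (\<Sum>p\<in>P. ennreal (g p))"
      by (rule sum.cong) (auto simp: g_def)
    also have "\<dots> = ennreal (\<Sum>p\<in>P. g p)" using g0 by simp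
    also have "\<dots> \<le> ennreal (A0 * (q ^ L0 / (1 - q)))" by (rule ennreal_leI[OF R])
    finally show "(\<Sum>(c, r)\<in>P. ennreal ((2 * r) powr \<sigma>)) \<le> ennreal (A0 * (q ^ L0 / (1 - q)))" .
  qed
  show ?thesis using that q A0 main by blast
qed

lemma packing_zero_empty: "packing_zero \<sigma> ({}::complex set) = 0"
proof -
  have "packing_pre \<sigma> \<delta> ({}::complex set) = 0" for \<delta>
    unfolding packing_pre_def by (rule antisym[OF SUP_least]) auto
  then have "packing_zero \<sigma> ({}::complex set) = (\<Sqinter>\<delta>\<in>{0::real<..}. (0::ennreal))" unfolding packing_zero_def by simp
  also have "\<dots> = 0"
  proof -
    have "(1::real) \<in> {0<..}" by simp
    then have "{0::real<..} \<noteq> {}" by blast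
    then show ?thesis by (simp add: INF_constant)
  qed
  finally show ?thesis .
qed

lemma pack_upper:
  assumes sp: "\<sigma> > dd"
  shows "packing_measure \<sigma> (range Z) = 0"
proof -
  obtain A0 q where q: "0 < q" "q < 1" and A0: "A0 \<ge> 0"
    and pre: "\<And>L0. packing_pre \<sigma> (1 / rr ^ L0) (range Z) \<le> ennreal (A0 * (q ^ L0 / (1 - q)))"
    using pack_pre_upper[OF sp] by blast
  have le: "packing_zero \<sigma> (range Z) \<le> ennreal (A0 * (q ^ L0 / (1 - q)))" for L0
  proof -
    have "packing_zero \<sigma> (range Z) \<le> packing_pre \<sigma> (1 / rr ^ L0) (range Z)"
      unfolding packing_zero_def by (rule INF_lower) (use rr_pos in simp)
    also have "\<dots> \<le> ennreal (A0 * (q ^ L0 / (1 - q)))" by (rule pre)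
    finally show ?thesis .
  qed
  have lim: "(\<lambda>L. ennreal (A0 * (q ^ L / (1 - q)))) \<longlonglongrightarrow> ennreal (A0 * (0 / (1 - q)))"
    using q by (intro tendsto_ennrealI tendsto_mult tendsto_divide tendsto_const LIMSEQ_power_zero) auto
  have z: "packing_zero \<sigma> (range Z) = 0"
    using LIMSEQ_le_const[OF lim, of "packing_zero \<sigma> (range Z)"] le by auto
  define A where "A i = (if i = 0 then range Z else {})" for i :: nat
  have "packing_measure \<sigma> (range Z) \<le> (\<Sum>i. packing_zero \<sigma> (A i))"
    unfolding packing_measure_def by (rule INF_lower) (auto simp: A_def)
  also have "(\<Sum>i. packing_zero \<sigma> (A i)) = 0"
  proof -
    have "\<forall>i. packing_zero \<sigma> (A i) = 0" using z packing_zero_empty[of \<sigma>] by (auto simp: A_def)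
    then show ?thesis by simp
  qed
  finally show ?thesis by simp
qed

end

context cset begin

lemma cov_upper:
  assumes L: "m / rr ^ L \<le> \<delta>"
  shows "covering_number \<delta> (range Z) \<le> 2 ^ N L"
    and "\<exists>F. finite F \<and> card F = card (Cyl L ` PiE (J L) (\<lambda>_. UNIV)) \<and> range Z \<subseteq> \<Union>F \<and>
           (\<forall>U\<in>F. bounded U \<and> diameter U \<le> \<delta>)"
proof -
  let ?F = "Cyl L ` PiE (J L) (\<lambda>_. UNIV)"
  have P: "finite ?F \<and> card ?F = card ?F \<and> range Z \<subseteq> \<Union>?F \<and> (\<forall>U\<in>?F. bounded U \<and> diameter U \<le> \<delta>)"
  proof (intro conjI)
    show "finite ?F" using finite_PiE_J by simp
    show "range Z \<subseteq> \<Union>?F"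
    proof
      fix z assume "z \<in> range Z"
      then obtain \<omega> where "z = Z \<omega>" by auto
      then show "z \<in> \<Union>?F" using Cyl_cover[of \<omega> L] restrict_in[of \<omega> L] by blast
    qed
    show "\<forall>U\<in>?F. bounded U \<and> diameter U \<le> \<delta>"
      using Cyl_bounded Cyl_diam L order_trans by blast
  qed simp
  then show "\<exists>F. finite F \<and> card F = card ?F \<and> range Z \<subseteq> \<Union>F \<and> (\<forall>U\<in>F. bounded U \<and> diameter U \<le> \<delta>)"
    by blast
  have "covering_number \<delta> (range Z) \<le> card ?F"
    unfolding covering_number_def by (rule Least_le) (use P in blast)
  also have "card ?F \<le> card (PiE (J L) (\<lambda>_. UNIV :: bool set))" by (rule card_image_le) (rule finite_PiE_J)
  finally show "covering_number \<delta> (range Z) \<le> 2 ^ N L" by (simp add: card_PiE_J)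
qed

lemma cov_lower:
  assumes L: "\<delta> \<le> 1 / rr ^ L" and L': "m / rr ^ L' \<le> \<delta>"
  shows "2 ^ N L \<le> K * covering_number \<delta> (range Z)"
proof -
  let ?P = "\<lambda>k. \<exists>F. finite F \<and> card F = k \<and> range Z \<subseteq> \<Union>F \<and> (\<forall>U\<in>F. bounded U \<and> diameter U \<le> \<delta>)"
  have ex: "\<exists>k. ?P k" using cov_upper(2)[OF L'] by blast
  have "?P (covering_number \<delta> (range Z))"
    unfolding covering_number_def by (rule LeastI_ex[OF ex])
  then obtain F where F: "finite F" "card F = covering_number \<delta> (range Z)" "range Z \<subseteq> \<Union>F"
    "\<And>U. U \<in> F \<Longrightarrow> bounded U \<and> diameter U \<le> \<delta>" by blast
  have sub: "PiE (J L) (\<lambda>_. UNIV) \<subseteq> (\<Union>U\<in>F. V L U)"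
  proof
    fix v :: "nat \<Rightarrow> bool" assume v: "v \<in> PiE (J L) (\<lambda>_. UNIV)"
    define w where "w j = (if j \<in> J L then v j else False)" for j
    have rw: "restrict w (J L) = v" using v by (auto simp: w_def restrict_def PiE_def extensional_def fun_eq_iff)
    obtain U where U: "U \<in> F" "Z w \<in> U" using F(3) by blast
    then have "v \<in> V L U" using rw by (auto simp: V_def)
    then show "v \<in> (\<Union>U\<in>F. V L U)" using U by blast
  qed
  have "2 ^ N L = card (PiE (J L) (\<lambda>_. UNIV :: bool set))" by (simp add: card_PiE_J)
  also have "\<dots> \<le> card (\<Union>U\<in>F. V L U)"
    by (rule card_mono[OF _ sub]) (use F(1) finite_V in blast)
  also have "\<dots> \<le> (\<Sum>U\<in>F. card (V L U))" by (rule card_UN_le[OF F(1)])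
  also have "\<dots> \<le> (\<Sum>U\<in>F. K)"
  proof (rule sum_mono)
    fix U assume "U \<in> F"
    then have b: "bounded U" "diameter U \<le> \<delta>" using F(4) by auto
    show "card (V L U) \<le> K"
    proof (rule card_V)
      fix x y assume "x \<in> U" "y \<in> U"
      then have "dist x y \<le> diameter U" by (rule diameter_bounded_bound[OF b(1)])
      then show "cmod (x - y) \<le> 1 / rr ^ L" using b(2) L by (simp add: dist_norm)
    qed
  qed
  also have "\<dots> = K * covering_number \<delta> (range Z)" using F(2) by simp
  finally show ?thesis .
qed

lemma box_dim: "has_box_dim (range Z) dd"
proof -
  have "0 < 1 / rr" using rr_pos by simp
  then obtain k2 where k2: "m / rr ^ k2 < 1 / rr" using small_level by blast
  define E where "E = B * ln 2 + ln (real K) + dd * (real k2 + 1) * ln rr"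
  let ?c = "\<lambda>\<delta>. real (covering_number \<delta> (range Z))"
  have bound: "\<bar>ln (?c \<delta>) / - ln \<delta> - dd\<bar> \<le> E / - ln \<delta>" if d: "0 < \<delta>" "\<delta> < 1" for \<delta>
  proof -
    define L where "L = lev \<delta>"
    have L: "1 / rr ^ Suc L < \<delta>" "\<delta> \<le> 1 / rr ^ L" using lev[of \<delta>] d by (auto simp: L_def)
    have Lk: "m / rr ^ (L + k2) \<le> \<delta>"
    proof -
      have "m / rr ^ (L + k2) = (m / rr ^ k2) / rr ^ L" by (simp add: power_add field_simps)
      also have "\<dots> \<le> (1 / rr) / rr ^ L" using k2 rr_pos by (intro divide_right_mono) auto
      also have "\<dots> = 1 / rr ^ Suc L" by simp
      finally show ?thesis using L(1) by linarith
    qed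
    have lnd: "- ln \<delta> \<ge> real L * ln rr" "- ln \<delta> < (real L + 1) * ln rr"
    proof -
      have "ln \<delta> \<le> ln (1 / rr ^ L)" using L(2) d rr_pos by (subst ln_le_cancel_iff) auto
      then show "- ln \<delta> \<ge> real L * ln rr" using rr_pos by (simp add: ln_div ln_realpow)
      have "ln (1 / rr ^ Suc L) < ln \<delta>" using L(1) d rr_pos by (subst ln_less_cancel_iff) auto
      then show "- ln \<delta> < (real L + 1) * ln rr" using rr_pos by (simp add: ln_div ln_realpow del: power_Suc) (simp add: algebra_simps)
    qed
    have pos: "- ln \<delta> > 0" using d by simp
    have up: "?c \<delta> \<le> 2 powr B * rr powr (dd * real (L + k2))"
      using cov_upper(1)[OF Lk] two_pow_le[of "L + k2"]
      by (metis of_nat_le_iff of_nat_numeral of_nat_power order_trans)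
    have lo: "2 powr (-B) * rr powr (dd * real L) \<le> real K * ?c \<delta>"
      using cov_lower[OF L(2) Lk] two_pow_ge[of L]
      by (metis of_nat_le_iff of_nat_mult of_nat_numeral of_nat_power order_trans)
    have pp: "0 < 2 powr (-B) * rr powr (dd * real L)" using rr_pos by (intro mult_pos_pos) auto
    have cpos: "?c \<delta> > 0"
    proof -
      from pp have "0 < real K * ?c \<delta>" using lo by linarith
      then show ?thesis using K_ge1 by (simp add: zero_less_mult_iff)
    qed
    have lnup: "ln (?c \<delta>) \<le> B * ln 2 + dd * real (L + k2) * ln rr"
    proof -
      have "ln (?c \<delta>) \<le> ln (2 powr B * rr powr (dd * real (L + k2)))"
        using up cpos by (subst ln_le_cancel_iff) auto
      also have "\<dots> = B * ln 2 + dd * real (L + k2) * ln rr"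
        using rr_pos by (simp add: ln_mult ln_powr)
      finally show ?thesis .
    qed
    have lnlo: "- B * ln 2 + dd * real L * ln rr - ln (real K) \<le> ln (?c \<delta>)"
    proof -
      have "- B * ln 2 + dd * real L * ln rr = ln (2 powr (-B) * rr powr (dd * real L))"
        using rr_pos by (simp add: ln_mult ln_powr)
      also have "\<dots> \<le> ln (real K * ?c \<delta>)"
      proof (subst ln_le_cancel_iff)
        show "0 < real K * ?c \<delta>" using cpos K_ge1 by simp
      qed (use lo pp in auto)
      also have "\<dots> = ln (real K) + ln (?c \<delta>)" using cpos K_ge1 by (simp add: ln_mult)
      finally show ?thesis by simp
    qed
    have lnK: "ln (real K) \<ge> 0" using K_ge1 by simp
    have "\<bar>ln (?c \<delta>) - dd * (- ln \<delta>)\<bar> \<le> E"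
    proof -
      define A where "A = dd * real L * ln rr"
      define Y where "Y = dd * (- ln \<delta>)"
      define X where "X = ln (?c \<delta>)"
      define D1 where "D1 = dd * ln rr"
      define D2 where "D2 = dd * real k2 * ln rr"
      define BL where "BL = B * ln 2"
      define LK where "LK = ln (real K)"
      have a: "A \<le> Y" using lnd dd0 unfolding A_def Y_def
        by (metis mult.assoc mult_left_mono)
      have b: "Y \<le> A + D1"
      proof -
        have "dd * (- ln \<delta>) \<le> dd * ((real L + 1) * ln rr)" using lnd dd0 by (intro mult_left_mono) auto
        then show ?thesis unfolding A_def Y_def D1_def by (simp add: algebra_simps)
      qed
      have c: "X \<le> BL + A + D2" using lnup unfolding X_def BL_def A_def D2_def by (simp add: algebra_simps)
      have d: "- BL + A - LK \<le> X" using lnlo unfolding X_def BL_def A_def LK_def by (simp add: algebra_simps)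
      have "ln (2::real) > 0" by simp
      then have e: "BL \<ge> 0" using B0 unfolding BL_def by simp
      have f: "D2 \<ge> 0" "D1 \<ge> 0" using dd0 ln_rr unfolding D1_def D2_def by auto
      have g: "LK \<ge> 0" using lnK unfolding LK_def .
      have E: "E = BL + LK + D2 + D1" unfolding E_def BL_def LK_def D2_def D1_def by (simp add: algebra_simps)
      have "\<bar>X - Y\<bar> \<le> E" unfolding E using a b c d e f g by linarith
      then show ?thesis unfolding X_def Y_def .
    qed
    then have "\<bar>ln (?c \<delta>) - dd * (- ln \<delta>)\<bar> / - ln \<delta> \<le> E / - ln \<delta>"
      using pos by (intro divide_right_mono) auto
    moreover have "ln (?c \<delta>) / - ln \<delta> - dd = (ln (?c \<delta>) - dd * (- ln \<delta>)) / - ln \<delta>"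
      using pos by (simp add: field_simps)
    ultimately show ?thesis using pos by (simp add: abs_divide)
  qed
  have lnlim: "filterlim (\<lambda>\<delta>::real. - ln \<delta>) at_top (at_right 0)"
    by (subst filterlim_uminus_at_top) (simp add: ln_at_0)
  have Elim: "((\<lambda>\<delta>. E / - ln \<delta>) \<longlongrightarrow> 0) (at_right 0)"
    by (rule tendsto_divide_0[OF tendsto_const filterlim_at_top_imp_at_infinity[OF lnlim]])
  have ev: "eventually (\<lambda>\<delta>. norm (ln (?c \<delta>) / - ln \<delta> - dd) \<le> E / - ln \<delta>) (at_right (0::real))"
    unfolding eventually_at_right_field by (rule exI[of _ 1]) (use bound in auto)
  have "((\<lambda>\<delta>. ln (?c \<delta>) / - ln \<delta> - dd) \<longlongrightarrow> 0) (at_right 0)"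
    by (rule Lim_null_comparison[OF ev Elim])
  then show ?thesis unfolding has_box_dim_def by (rule LIM_zero_cancel)
qed

lemma dims: "hausdorff_dim (range Z) = dd" "packing_dim (range Z) = dd"
proof -
  have "{\<sigma>. 0 \<le> \<sigma> \<and> hausdorff_measure \<sigma> (range Z) = 0} = {dd<..}"
  proof (intro set_eqI iffI)
    fix \<sigma> assume "\<sigma> \<in> {\<sigma>. 0 \<le> \<sigma> \<and> hausdorff_measure \<sigma> (range Z) = 0}"
    then show "\<sigma> \<in> {dd<..}" using haus_lower[of \<sigma>] by (cases "\<sigma> \<le> dd") auto
  next
    fix \<sigma> assume "\<sigma> \<in> {dd<..}"
    then show "\<sigma> \<in> {\<sigma>. 0 \<le> \<sigma> \<and> hausdorff_measure \<sigma> (range Z) = 0}" using haus_upper[of \<sigma>] dd0 by auto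
  qed
  then show "hausdorff_dim (range Z) = dd" unfolding hausdorff_dim_def by simp
  have "{\<sigma>. 0 \<le> \<sigma> \<and> packing_measure \<sigma> (range Z) = 0} = {dd<..}"
  proof (intro set_eqI iffI)
    fix \<sigma> assume "\<sigma> \<in> {\<sigma>. 0 \<le> \<sigma> \<and> packing_measure \<sigma> (range Z) = 0}"
    then show "\<sigma> \<in> {dd<..}" using pack_lower[of \<sigma>] by (cases "\<sigma> \<le> dd") auto
  next
    fix \<sigma> assume "\<sigma> \<in> {dd<..}"
    then show "\<sigma> \<in> {\<sigma>. 0 \<le> \<sigma> \<and> packing_measure \<sigma> (range Z) = 0}" using pack_upper[of \<sigma>] dd0 by auto
  qed
  then show "packing_dim (range Z) = dd" unfolding packing_dim_def by simp
qed

end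

lemma sum_split_nat: "(\<Sum>i<m + n. g i) = (\<Sum>i<m. g i) + (\<Sum>i<n. g (m + i))"
  for g :: "nat \<Rightarrow> real"
  by (induction n) (auto simp: add.assoc)

lemma count_bound:
  fixes s :: "nat \<Rightarrow> int" and p :: nat
  assumes hp: "p \<ge> 1"
    and per: "\<And>j. j \<ge> p \<Longrightarrow> (s j = 0) = (s (p + (j - p) mod p) = 0)"
  defines "F \<equiv> card {l. l < p \<and> s (p + l) = 0}"
  shows "\<bar>real (card {j. j < L \<and> s j = 0}) - real F / real p * real L\<bar> \<le> 2 * real p"
proof -
  define ind where "ind j = (if s j = 0 then 1 else 0 :: real)" for j
  have c: "real (card {j. j < L' \<and> s j = 0}) = (\<Sum>j<L'. ind j)" for L'
  proof -
    have e: "{j. j < L' \<and> s j = 0} = {..<L'} \<inter> {j. s j = 0}" by auto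
    show ?thesis unfolding e by (simp add: ind_def sum.If_cases)
  qed
  have Fs: "real F = (\<Sum>l<p. ind (p + l))"
  proof -
    have e: "{l. l < p \<and> s (p + l) = 0} = {..<p} \<inter> {l. s (p + l) = 0}" by auto
    show ?thesis unfolding F_def e by (simp add: ind_def sum.If_cases)
  qed
  have Fp: "real F \<le> real p"
  proof -
    have "F \<le> card {..<p}" unfolding F_def by (rule card_mono) auto
    then show ?thesis by simp
  qed
  have blk: "(\<Sum>l<p. ind (p + k * p + l)) = real F" for k
  proof -
    have "ind (p + k * p + l) = ind (p + l)" if "l < p" for l
    proof -
      have "(p + k * p + l - p) mod p = l" using that by simp
      then show ?thesis using per[of "p + k * p + l"] by (simp add: ind_def)
    qed
    then show ?thesis using Fs by simp
  qed
  have chi01: "0 \<le> ind j" "ind j \<le> 1" for j by (auto simp: ind_def)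
  have sum_le: "(\<Sum>j<n. ind (q + j)) \<le> real n" "0 \<le> (\<Sum>j<n. ind (q + j))" for n q
  proof -
    have "(\<Sum>j<n. ind (q + j)) \<le> (\<Sum>j<n. 1)" by (intro sum_mono) (simp add: chi01)
    then show "(\<Sum>j<n. ind (q + j)) \<le> real n" by simp
    show "0 \<le> (\<Sum>j<n. ind (q + j))" by (intro sum_nonneg) (simp add: chi01)
  qed
  have per_sum: "(\<Sum>j<p + k * p. ind j) = (\<Sum>j<p. ind j) + real k * real F" for k
  proof (induction k)
    case 0 then show ?case by simp
  next
    case (Suc k)
    have "(\<Sum>j<p + Suc k * p. ind j) = (\<Sum>j<(p + k * p) + p. ind j)" by (simp add: algebra_simps)
    also have "\<dots> = (\<Sum>j<p + k * p. ind j) + (\<Sum>l<p. ind (p + k * p + l))" by (rule sum_split_nat)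
    also have "\<dots> = (\<Sum>j<p. ind j) + real (Suc k) * real F" using Suc blk[of k] by (simp add: algebra_simps)
    finally show ?case .
  qed
  have p0: "real p > 0" using hp by simp
  show ?thesis
  proof (cases "L < p")
    case True
    have "(\<Sum>j<L. ind j) \<le> real L" "0 \<le> (\<Sum>j<L. ind j)" using sum_le[where n=L and q=0] by simp_all
    moreover have "real F / real p * real L \<le> real L" "0 \<le> real F / real p * real L"
    proof -
      have "real F * real L \<le> real p * real L" using Fp by (intro mult_right_mono) auto
      then show "real F / real p * real L \<le> real L" using p0 by (simp add: divide_le_eq mult.commute)
      show "0 \<le> real F / real p * real L" by simp
    qed
    moreover have "real L < real p" using True by simp
    ultimately show ?thesis unfolding c abs_le_iff by linarith
  next
    case False
    define k where "k = (L - p) div p"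
    define r where "r = (L - p) mod p"
    have Ld: "L = (p + k * p) + r" using False by (simp add: k_def r_def)
    have rp: "r < p" using hp by (simp add: r_def)
    have sL: "(\<Sum>j<L. ind j) = (\<Sum>j<p. ind j) + real k * real F + (\<Sum>l<r. ind (p + k * p + l))"
    proof -
      have "(\<Sum>j<L. ind j) = (\<Sum>j<p + k * p. ind j) + (\<Sum>l<r. ind (p + k * p + l))"
        unfolding Ld by (rule sum_split_nat)
      then show ?thesis by (simp only: per_sum)
    qed
    have A: "0 \<le> (\<Sum>j<p. ind j)" "(\<Sum>j<p. ind j) \<le> real p" using sum_le[where n=p and q=0] by simp_all
    have Bq: "0 \<le> (\<Sum>l<r. ind (p + k * p + l))" "(\<Sum>l<r. ind (p + k * p + l)) \<le> real p"
      using sum_le[where n=r and q="p + k * p"] rp by auto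
    have fL: "real F / real p * real L = real F + real k * real F + real F * real r / real p"
      unfolding Ld using p0 by (simp add: field_simps)
    have C: "0 \<le> real F * real r / real p" "real F * real r / real p \<le> real p"
    proof -
      show "0 \<le> real F * real r / real p" by simp
      have "real F * real r \<le> real p * real p" using Fp rp by (intro mult_mono) auto
      then show "real F * real r / real p \<le> real p" using p0 by (simp add: divide_le_eq)
    qed
    have F0: "0 \<le> real F" by simp
    show ?thesis unfolding c sL fL abs_le_iff using A Bq C Fp F0 by linarith
  qed
qed

context cset begin

lemma summ: "(\<And>j. cmod (e j) \<le> m) \<Longrightarrow> summable (\<lambda>j. e j / bb ^ Suc j)"
  using tail_bound(1)[of bb e m 0] rr_gt2 by (simp add: bb_norm)

lemma range_Z:
  assumes hsum: "\<alpha> = (\<Sum>j. of_int (s j) / bb ^ Suc j)"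
    and huniq: "\<forall>t :: nat \<Rightarrow> int. (\<forall>j. t j \<in> {0, int m, - int m}) \<and>
                   \<alpha> = (\<Sum>j. of_int (t j) / bb ^ Suc j) \<longrightarrow> t = s"
  shows "radix_set bb {0, of_nat m} \<inter> (\<lambda>z. z + \<alpha>) ` radix_set bb {0, of_nat m} = range Z"
proof (intro equalityI subsetI)
  fix z assume z: "z \<in> radix_set bb {0, of_nat m} \<inter> (\<lambda>z. z + \<alpha>) ` radix_set bb {0, of_nat m}"
  then obtain d where d: "\<forall>j. d j \<in> {0, of_nat m}" "z = (\<Sum>j. d j / bb ^ Suc j)"
    by (auto simp: radix_set_def)
  from z obtain d' where d': "\<forall>j. d' j \<in> {0, of_nat m}" "z = (\<Sum>j. d' j / bb ^ Suc j) + \<alpha>"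
    by (auto simp: radix_set_def)
  define t where "t j = (if d j = of_nat m then int m else 0) - (if d' j = of_nat m then int m else 0)" for j
  have td: "of_int (t j) = d j - d' j" for j
  proof -
    have "d j = 0 \<or> d j = of_nat m" "d' j = 0 \<or> d' j = of_nat m" using d(1) d'(1) by auto
    then show ?thesis using m2 by (auto simp: t_def)
  qed
  have tin: "\<forall>j. t j \<in> {0, int m, - int m}" by (auto simp: t_def)
  have sd: "summable (\<lambda>j. d j / bb ^ Suc j)" "summable (\<lambda>j. d' j / bb ^ Suc j)"
  proof -
    have b: "cmod (d j) \<le> m" "cmod (d' j) \<le> m" for j
    proof -
      have "d j = 0 \<or> d j = of_nat m" "d' j = 0 \<or> d' j = of_nat m" using d(1) d'(1) by auto
      then show "cmod (d j) \<le> m" "cmod (d' j) \<le> m" by auto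
    qed
    show "summable (\<lambda>j. d j / bb ^ Suc j)" by (rule summ) (rule b(1))
    show "summable (\<lambda>j. d' j / bb ^ Suc j)" by (rule summ) (rule b(2))
  qed
  have "\<alpha> = (\<Sum>j. d j / bb ^ Suc j) - (\<Sum>j. d' j / bb ^ Suc j)" using d(2) d'(2)
    by (simp add: algebra_simps del: power_Suc)
  also have "\<dots> = (\<Sum>j. d j / bb ^ Suc j - d' j / bb ^ Suc j)" by (rule suminf_diff[OF sd])
  also have "\<dots> = (\<Sum>j. of_int (t j) / bb ^ Suc j)" by (simp add: td diff_divide_distrib)
  finally have "\<alpha> = (\<Sum>j. of_int (t j) / bb ^ Suc j)" .
  then have "t = s" using huniq tin by blast
  define \<omega> where "\<omega> j = (d j = of_nat m)" for j
  have "dig j (\<omega> j) = d j" for j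
  proof -
    have "s j \<in> {0, int m, - int m}" by (rule s01)
    moreover have "t j = s j" using \<open>t = s\<close> by simp
    ultimately show ?thesis using d(1) d'(1) m2 unfolding dig_def \<omega>_def t_def
      by (auto split: if_splits)
  qed
  then have "z = Z \<omega>" using d(2) by (simp add: Z_def)
  then show "z \<in> range Z" by simp
next
  fix z assume "z \<in> range Z"
  then obtain \<omega> where z: "z = Z \<omega>" by auto
  have in1: "Z \<omega> \<in> radix_set bb {0, of_nat m}"
    unfolding radix_set_def Z_def
    by (rule CollectI, rule exI[of _ "\<lambda>j. dig j (\<omega> j)"]) (simp add: dig_def)
  define e where "e j = dig j (\<omega> j) - of_int (s j)" for j
  have ein: "e j \<in> {0, of_nat m}" for j
    using s01[of j] m2 by (auto simp: e_def dig_def)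
  have ss: "summable (\<lambda>j. of_int (s j) / bb ^ Suc j)"
  proof (rule summ)
    fix j
    have "s j = 0 \<or> s j = int m \<or> s j = - int m" using s01[of j] by simp
    then show "cmod (of_int (s j)) \<le> real m" by auto
  qed
  have "Z \<omega> - \<alpha> = (\<Sum>j. dig j (\<omega> j) / bb ^ Suc j - of_int (s j) / bb ^ Suc j)"
    unfolding Z_def hsum by (rule suminf_diff[OF summable_Z ss])
  also have "\<dots> = (\<Sum>j. e j / bb ^ Suc j)" by (simp add: e_def diff_divide_distrib)
  finally have "Z \<omega> - \<alpha> \<in> radix_set bb {0, of_nat m}"
    unfolding radix_set_def by (intro CollectI exI[of _ e]) (use ein in blast)
  then have "Z \<omega> \<in> (\<lambda>z. z + \<alpha>) ` radix_set bb {0, of_nat m}"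
    by (rule rev_image_eqI) simp
  with in1 show "z \<in> radix_set bb {0, of_nat m} \<inter> (\<lambda>z. z + \<alpha>) ` radix_set bb {0, of_nat m}"
    using z by simp
qed

end

theorem corollary5p13:
  fixes n m :: nat and \<alpha> :: complex and s :: "nat \<Rightarrow> int"
    and p :: nat and a :: "nat \<Rightarrow> int" and u :: "nat \<Rightarrow> nat"
  defines "b \<equiv> - of_nat n + \<i>"
      and "D \<equiv> {0, of_nat m} :: complex set"
  assumes hn: "n \<ge> 2"
    and hm: "2 \<le> m" "m \<le> n ^ 2"
    and h\<alpha>E: "\<alpha> \<in> radix_diff_set b D"
    and hs: "\<forall>j. s j \<in> {0, int m, - int m}"
    and hsum: "\<alpha> = (\<Sum>j. of_int (s j) / b ^ Suc j)"
    and huniq: "\<forall>t :: nat \<Rightarrow> int. (\<forall>j. t j \<in> {0, int m, - int m}) \<and>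
                   \<alpha> = (\<Sum>j. of_int (t j) / b ^ Suc j) \<longrightarrow> t = s"
    and hp: "p \<ge> 1"
    and hpre: "\<forall>j < p. int m - \<bar>s j\<bar> = a j"
    and hper: "\<forall>j \<ge> p. int m - \<bar>s j\<bar> = a ((j - p) mod p) + int (u ((j - p) mod p))"
  shows "has_box_dim (radix_set b D \<inter> (\<lambda>z. z + \<alpha>) ` radix_set b D)
           (ln 2 * (\<Sum>l<p. real_of_int (a l + int (u l))) / (real m * real p * ln (cmod b)))
       \<and> hausdorff_dim (radix_set b D \<inter> (\<lambda>z. z + \<alpha>) ` radix_set b D)
           = ln 2 * (\<Sum>l<p. real_of_int (a l + int (u l))) / (real m * real p * ln (cmod b))
       \<and> packing_dim (radix_set b D \<inter> (\<lambda>z. z + \<alpha>) ` radix_set b D)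
           = ln 2 * (\<Sum>l<p. real_of_int (a l + int (u l))) / (real m * real p * ln (cmod b))"
proof -
  define F where "F = card {l. l < p \<and> s (p + l) = 0}"
  have s3: "s j = 0 \<or> s j = int m \<or> s j = - int m" for j using hs by auto
  have mabs: "int m - \<bar>s j\<bar> = (if s j = 0 then int m else 0)" for j
    using s3[of j] by auto
  have per: "(s j = 0) = (s (p + (j - p) mod p) = 0)" if j: "j \<ge> p" for j
  proof -
    define j' where "j' = p + (j - p) mod p"
    have jj: "(j' - p) mod p = (j - p) mod p" by (simp add: j'_def)
    have "int m - \<bar>s j\<bar> = a ((j - p) mod p) + int (u ((j - p) mod p))" using hper j by blast
    moreover have "int m - \<bar>s j'\<bar> = a ((j' - p) mod p) + int (u ((j' - p) mod p))"
      using hper by (simp add: j'_def)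
    ultimately have "int m - \<bar>s j\<bar> = int m - \<bar>s j'\<bar>" unfolding jj by simp
    then show ?thesis unfolding j'_def[symmetric] mabs using hm by (auto split: if_splits)
  qed
  have NB: "\<bar>real (card {j. j < L \<and> s j = 0}) - real F / real p * real L\<bar> \<le> 2 * real p" for L
    unfolding F_def by (rule count_bound[of p s, OF hp per])
  interpret C: cset n m s "real F / real p" "2 * real p"
  proof
    show "2 \<le> n" by (rule hn)
    show "2 \<le> m" "m \<le> n ^ 2" by (rule hm(1), rule hm(2))
    show "\<And>j. s j \<in> {0, int m, - int m}" using hs by blast
    show "0 \<le> real F / real p" by simp
    show "\<And>L. \<bar>real (card {j. j < L \<and> s j = 0}) - real F / real p * real L\<bar> \<le> 2 * real p" by (rule NB)
  qed
  have bb: "C.bb = b" by (simp add: C.bb_def b_def)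
  have S: "radix_set b D \<inter> (\<lambda>z. z + \<alpha>) ` radix_set b D = range C.Z"
    using C.range_Z[of \<alpha>] hsum huniq unfolding bb D_def by simp
  have sumau: "(\<Sum>l<p. real_of_int (a l + int (u l))) = real m * real F"
  proof -
    have "a l + int (u l) = (if s (p + l) = 0 then int m else 0)" if "l < p" for l
    proof -
      have "int m - \<bar>s (p + l)\<bar> = a ((p + l - p) mod p) + int (u ((p + l - p) mod p))"
        using hper by simp
      then show ?thesis using that mabs[of "p + l"] by simp
    qed
    then have "(\<Sum>l<p. real_of_int (a l + int (u l))) = (\<Sum>l<p. if s (p + l) = 0 then real m else 0)"
      by (intro sum.cong) auto
    also have "\<dots> = real m * real F"
    proof -
      have e: "{l. l < p \<and> s (p + l) = 0} = {..<p} \<inter> {l. s (p + l) = 0}" by auto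
      show ?thesis unfolding F_def e by (simp add: sum.If_cases)
    qed
    finally show ?thesis .
  qed
  have dd: "C.dd = ln 2 * (\<Sum>l<p. real_of_int (a l + int (u l))) / (real m * real p * ln (cmod b))"
    unfolding sumau C.dd_def C.rr_def bb using hm by (simp add: field_simps)
  show ?thesis unfolding S dd[symmetric] using C.box_dim C.dims by simp
qed

end
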